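(* Let $A$ be a real skew-symmetric $N\times N$ matrix and $B$ a real $N\times r$ matrix such that the pair $(A,B)$ is controllable, and let $K_{(A,B)}$ be the minimal non-negative integer such that $\operatorname{rank}[B,AB,\dots,A^{K_{(A,B)}}B]=N$. Let $\rho>0$ and let $\alpha\in L^\infty([0,\infty),[0,1])$ be such that there exists a sequence $(a_n,b_n)$, $n\in\mathbb{N}$, of pairwise disjoint intervals in $[0,\infty)$ with $\int_{a_n}^{b_n}\alpha(t)\,dt\ge\rho(b_n-a_n)$ for all $n$ and $\sum_{n=1}^\infty(b_n-a_n)^{2K_{(A,B)}+1}=\infty$. Then every solution $z(\cdot)$ of $\dot z(t)=Az(t)-\alpha(t)BB^\top z(t)$ satisfies $\|z(t)\|_{\mathbb{R}^N}\to0$ as $t\to\infty$.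
   Context: Solutions are understood in the Carathéodory (absolutely continuous) sense, equivalently $z(t)=e^{tA}z(0)-\int_0^te^{(t-s)A}\alpha(s)BB^\top z(s)\,ds$. Controllability of $(A,B)$ means $\operatorname{rank}[B,AB,\dots,A^{N-1}B]=N$. *)

theory Defs
  imports "HOL-Analysis.Analysis"
begin

text \<open>Matrix power A^k for square real matrices.\<close>
definition mpow :: "real^'n^'n \<Rightarrow> nat \<Rightarrow> real^'n^'n" where
  "mpow A k = ((\<lambda>M. A ** M) ^^ k) (mat 1)"

text \<open>Rank of the block matrix [B, AB, ..., A^K B]: the dimension of the span
  of its columns, i.e. of all columns of the blocks A^j B, j = 0..K.\<close>
definition kalman_rank :: "real^'n^'n \<Rightarrow> real^'r^'n \<Rightarrow> nat \<Rightarrow> nat" where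
  "kalman_rank A B K = dim (\<Union>j\<in>{..K}. columns (mpow A j ** B))"

text \<open>Controllability: rank [B, AB, ..., A^(N-1) B] = N.\<close>
definition controllable :: "real^'n^'n \<Rightarrow> real^'r^'n \<Rightarrow> bool" where
  "controllable A B \<longleftrightarrow> kalman_rank A B (CARD('n) - 1) = CARD('n)"

text \<open>K_(A,B): least non-negative K with rank [B, AB, ..., A^K B] = N.\<close>
definition kalman_index :: "real^'n^'n \<Rightarrow> real^'r^'n \<Rightarrow> nat" where
  "kalman_index A B = (LEAST K. kalman_rank A B K = CARD('n))"

text \<open>Caratheodory solution on [0,\<infinity>) of z' = A z - \<alpha>(t) B B^T z, in integral form.\<close>
definition is_solution :: "real^'n^'n \<Rightarrow> real^'r^'n \<Rightarrow> (real \<Rightarrow> real) \<Rightarrow> (real \<Rightarrow> real^'n) \<Rightarrow> bool" where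
  "is_solution A B \<alpha> z \<longleftrightarrow>
     (\<forall>t\<ge>0. ((\<lambda>s. A *v z s - \<alpha> s *\<^sub>R ((B ** transpose B) *v z s)) has_integral (z t - z 0)) {0..t})"

end

theory Submission
  imports Defs "HOL-Computational_Algebra.Polynomial"
begin


lemma coeff_prod_lin_bound:
  fixes u :: "nat \<Rightarrow> real"
  assumes "finite S" "\<And>j. j \<in> S \<Longrightarrow> \<bar>u j\<bar> \<le> 1"
  shows "\<bar>coeff (\<Prod>j\<in>S. [:- u j, 1:]) n\<bar> \<le> 2 ^ card S"
  using assms
proof (induction S arbitrary: n rule: finite_induct)
  case empty then show ?case by (cases n) auto
next
  case (insert i S)
  define Q where "Q = (\<Prod>j\<in>S. [:- u j, 1:])"
  have eq: "(\<Prod>j\<in>insert i S. [:- u j, 1:]) = smult (- u i) Q + pCons 0 Q"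
    using insert by (simp add: Q_def mult_pCons_left)
  have IH: "\<And>m. \<bar>coeff Q m\<bar> \<le> 2 ^ card S" using insert by (simp add: Q_def)
  have ui: "\<bar>u i\<bar> \<le> 1" using insert by simp
  have c1: "\<bar>coeff (smult (- u i) Q) n\<bar> \<le> 2 ^ card S"
  proof -
    have "\<bar>coeff (smult (- u i) Q) n\<bar> = \<bar>u i\<bar> * \<bar>coeff Q n\<bar>" by (simp add: abs_mult)
    also have "\<dots> \<le> 1 * 2 ^ card S" using ui IH[of n] by (intro mult_mono) auto
    finally show ?thesis by simp
  qed
  have c2: "\<bar>coeff (pCons 0 Q) n\<bar> \<le> 2 ^ card S"
    using IH by (cases n) auto
  have "\<bar>coeff (\<Prod>j\<in>insert i S. [:- u j, 1:]) n\<bar>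
        \<le> \<bar>coeff (smult (- u i) Q) n\<bar> + \<bar>coeff (pCons 0 Q) n\<bar>"
    unfolding eq coeff_add by (rule abs_triangle_ineq)
  also have "\<dots> \<le> 2 ^ card (insert i S)" using c1 c2 insert by simp
  finally show ?case .
qed

lemma lagrange_coeff_bound:
  fixes p :: "real poly" and u :: "nat \<Rightarrow> real"
  assumes deg: "degree p \<le> K"
    and u01: "\<And>i. i \<le> K \<Longrightarrow> \<bar>u i\<bar> \<le> 1"
    and sep: "\<And>i j. i \<le> K \<Longrightarrow> j \<le> K \<Longrightarrow> i \<noteq> j \<Longrightarrow> h \<le> \<bar>u i - u j\<bar>"
    and h: "0 < h"
    and small: "\<And>i. i \<le> K \<Longrightarrow> \<bar>poly p (u i)\<bar> \<le> \<delta>"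
  shows "\<bar>coeff p n\<bar> \<le> real (K+1) * \<delta> * 2^K / h^K"
proof -
  define N where "N i = (\<Prod>j\<in>{..K}-{i}. [:- u j, 1:])" for i
  define d where "d i = (\<Prod>j\<in>{..K}-{i}. (u i - u j))" for i
  define q where "q = (\<Sum>i\<le>K. smult (poly p (u i) / d i) (N i))"
  have cardK: "i \<le> K \<Longrightarrow> card ({..K}-{i}) = K" for i by simp
  have polyN: "poly (N i) x = (\<Prod>j\<in>{..K}-{i}. (x - u j))" for i x
    by (simp add: N_def poly_prod)
  have dge: "h ^ K \<le> \<bar>d i\<bar>" if "i \<le> K" for i
  proof -
    have "h ^ K = (\<Prod>j\<in>{..K}-{i}. h)" using cardK[OF that] by simp
    also have "\<dots> \<le> (\<Prod>j\<in>{..K}-{i}. \<bar>u i - u j\<bar>)"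
      using sep that h by (intro prod_mono) auto
    also have "\<dots> = \<bar>d i\<bar>" by (simp add: d_def abs_prod)
    finally show ?thesis .
  qed
  have dpos: "0 < \<bar>d i\<bar>" if "i \<le> K" for i
    using dge[OF that] h by (meson less_le_trans zero_less_power)
  have polyN_i: "poly (N i) (u i) = d i" for i by (simp add: polyN d_def)
  have polyN_k: "poly (N i) (u k) = 0" if "k \<le> K" "k \<noteq> i" for i k
    unfolding polyN using that by (intro prod_zero) auto
  have polyq: "poly q (u k) = poly p (u k)" if "k \<le> K" for k
  proof -
    have "poly q (u k) = (\<Sum>i\<le>K. poly p (u i) / d i * poly (N i) (u k))"
      by (simp add: q_def poly_sum)
    also have "\<dots> = poly p (u k) / d k * poly (N k) (u k)"
      using that by (subst sum.remove[of _ k]) (auto simp: polyN_k intro!: sum.neutral)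
    also have "\<dots> = poly p (u k)" using dpos[OF that] by (simp add: polyN_i)
    finally show ?thesis .
  qed
  have degq: "degree q \<le> K"
  proof -
    have "degree (N i) \<le> K" if "i \<le> K" for i
    proof -
      have "degree (N i) \<le> (\<Sum>j\<in>{..K}-{i}. degree [:- u j, 1:])"
        unfolding N_def using degree_prod_sum_le[of "{..K}-{i}" "\<lambda>j. [:- u j, 1:]"] by (simp add: o_def)
      also have "\<dots> = K" using cardK[OF that] by simp
      finally show ?thesis .
    qed
    then show ?thesis unfolding q_def
      by (intro degree_sum_le) (auto intro: order.trans[OF degree_smult_le])
  qed
  have pq: "p = q"
  proof (rule ccontr)
    assume ne: "p \<noteq> q"
    define r where "r = p - q"
    have r0: "r \<noteq> 0" using ne by (simp add: r_def)
    have degr: "degree r \<le> K" unfolding r_def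
      using deg degq by (meson degree_diff_le)
    have inj: "inj_on u {..K}"
      using sep h by (force simp: inj_on_def)
    have sub: "u ` {..K} \<subseteq> {x. poly r x = 0}"
      using polyq by (auto simp: r_def)
    have "K + 1 = card (u ` {..K})" using card_image[OF inj] by simp
    also have "\<dots> \<le> card {x. poly r x = 0}"
      using sub poly_roots_finite[OF r0] by (rule card_mono[rotated])
    also have "\<dots> \<le> degree r" by (rule card_poly_roots_bound[OF r0])
    finally show False using degr by simp
  qed
  have "coeff p n = (\<Sum>i\<le>K. poly p (u i) / d i * coeff (N i) n)"
  proof -
    have "coeff p n = coeff q n" using pq by simp
    also have "\<dots> = (\<Sum>i\<le>K. poly p (u i) / d i * coeff (N i) n)"
      unfolding q_def by (simp add: coeff_sum)
    finally show ?thesis .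
  qed
  also have "\<bar>\<dots>\<bar> \<le> (\<Sum>i\<le>K. \<bar>poly p (u i) / d i * coeff (N i) n\<bar>)"
    by (rule sum_abs)
  also have "\<dots> \<le> (\<Sum>i\<le>K. \<delta> * 2^K / h^K)"
  proof (rule sum_mono)
    fix i assume "i \<in> {..K}"
    then have iK: "i \<le> K" by simp
    have cN: "\<bar>coeff (N i) n\<bar> \<le> 2^K"
      using coeff_prod_lin_bound[of "{..K}-{i}" u n] u01 cardK[OF iK] by (simp add: N_def)
    have d0: "0 \<le> \<delta>" using small[OF iK] by linarith
    have "\<bar>poly p (u i) / d i * coeff (N i) n\<bar> = \<bar>poly p (u i)\<bar> * \<bar>coeff (N i) n\<bar> / \<bar>d i\<bar>"
      by (simp add: abs_mult)
    also have "\<dots> \<le> \<delta> * 2^K / h^K"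
      using small[OF iK] cN dge[OF iK] h d0
      by (intro frac_le mult_mono) auto
    finally show "\<bar>poly p (u i) / d i * coeff (N i) n\<bar> \<le> \<delta> * 2^K / h^K" .
  qed
  also have "\<dots> = real (K+1) * \<delta> * 2^K / h^K" by simp
  finally show ?thesis .
qed


lemma fmeas_sub:
  fixes S :: "real set"
  assumes "S \<in> sets lborel" "S \<subseteq> {a..b}"
  shows "S \<in> fmeasurable lborel"
proof -
  have "emeasure lborel S \<le> emeasure lborel {a..b}"
    using assms by (intro emeasure_mono) auto
  also have "\<dots> < \<infinity>" by (cases "a \<le> b") auto
  finally show ?thesis using assms by (simp add: fmeasurable_def)
qed

lemma separated_points:
  fixes G :: "real set" and K :: nat
  assumes G: "G \<in> sets lborel" "G \<subseteq> {a..b}" and m: "0 < m" "m \<le> measure lborel G"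
  shows "\<exists>u::nat\<Rightarrow>real. (\<forall>i\<le>K. u i \<in> G) \<and>
     (\<forall>i j. i \<le> K \<longrightarrow> j \<le> K \<longrightarrow> i \<noteq> j \<longrightarrow> m / (2 * real K + 2) \<le> \<bar>u i - u j\<bar>)"
proof -
  define F where "F t = measure lborel (G \<inter> {a..t})" for t
  define h where "h = m / (2 * real K + 2)"
  have hpos: "0 < h" using m unfolding h_def by (intro divide_pos_pos) auto
  have Gne: "G \<noteq> {}" using m by auto
  then have ab: "a \<le> b" using G by auto
  have fmG: "G \<inter> S \<in> fmeasurable lborel" if "S \<in> sets lborel" for S
    using that G by (intro fmeas_sub[of _ a b]) auto
  have Fmono: "F s \<le> F t" if "s \<le> t" for s t
    unfolding F_def using that fmG[of "{a..t}"] G(1) by (intro measure_mono_fmeasurable) auto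
  have Fdiff: "F t - F s \<le> t - s" if "a \<le> s" "s \<le> t" for s t
  proof -
    have un: "G \<inter> {a..t} = (G \<inter> {a..s}) \<union> (G \<inter> {s<..t})" using that by auto
    have "F t = F s + measure lborel (G \<inter> {s<..t})"
      unfolding F_def un
      using fmG[of "{a..s}"] fmG[of "{s<..t}"]
      by (intro measure_Union) (auto simp: fmeasurable_def)
    moreover have "measure lborel (G \<inter> {s<..t}) \<le> measure lborel {s<..t}"
    proof -
      have "{s<..t} \<in> fmeasurable lborel" by (rule fmeas_sub[of _ s t]) auto
      then show ?thesis using G(1) by (intro measure_mono_fmeasurable) auto
    qed
    ultimately show ?thesis using that by simp
  qed
  have Fa: "F a = 0"
  proof -
    have fa: "{a..a} \<in> fmeasurable lborel" by (rule fmeas_sub[of _ a a]) auto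
    have "F a \<le> measure lborel {a..a}" unfolding F_def
      using G(1) fa by (intro measure_mono_fmeasurable) auto
    moreover have "0 \<le> F a" unfolding F_def by simp
    ultimately show ?thesis by simp
  qed
  have Fb: "F b = measure lborel G" unfolding F_def using G by (simp add: Int_absorb2)
  have cont: "continuous_on {a..b} F"
  proof (rule lipschitz_on_continuous_on[of 1])
    show "1-lipschitz_on {a..b} F"
    proof (rule lipschitz_onI)
      fix x y assume "x \<in> {a..b}" "y \<in> {a..b}"
      then show "dist (F x) (F y) \<le> 1 * dist x y"
        using Fdiff[of x y] Fdiff[of y x] Fmono[of x y] Fmono[of y x]
        by (cases "x \<le> y") (auto simp: dist_real_def)
    qed simp
  qed
  have "\<forall>i. \<exists>t. i \<le> 2*K+2 \<longrightarrow> a \<le> t \<and> t \<le> b \<and> F t = real i * h"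
  proof
    fix i
    show "\<exists>t. i \<le> 2*K+2 \<longrightarrow> a \<le> t \<and> t \<le> b \<and> F t = real i * h"
    proof (cases "i \<le> 2*K+2")
      case True
      have "real i * h \<le> real (2*K+2) * h" using True hpos by (intro mult_right_mono) auto
      also have "\<dots> = m" unfolding h_def by (simp add: field_simps add.commute)
      finally have "real i * h \<le> F b" using m Fb by simp
      moreover have "F a \<le> real i * h" using Fa hpos by simp
      ultimately obtain t where "t \<ge> a" "t \<le> b" "F t = real i * h"
        using IVT'[of F a "real i * h" b] ab cont by auto
      then show ?thesis by auto
    qed auto
  qed
  then obtain t where t: "\<And>i. i \<le> 2*K+2 \<Longrightarrow> a \<le> t i \<and> t i \<le> b \<and> F (t i) = real i * h"
    by metis
  have "\<forall>i. \<exists>v. i \<le> K \<longrightarrow> v \<in> G \<and> t (2*i) < v \<and> v \<le> t (2*i+1)"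
  proof
    fix i
    show "\<exists>v. i \<le> K \<longrightarrow> v \<in> G \<and> t (2*i) < v \<and> v \<le> t (2*i+1)"
    proof (cases "i \<le> K")
      case True
      have t1: "a \<le> t (2*i) \<and> t (2*i) \<le> b \<and> F (t (2*i)) = real (2*i) * h" using t True by simp
      have t2: "a \<le> t (2*i+1) \<and> t (2*i+1) \<le> b \<and> F (t (2*i+1)) = real (2*i+1) * h"
        using t True by simp
      have lt: "F (t (2*i)) < F (t (2*i+1))" using t1 t2 hpos by (simp add: distrib_right)
      then have le: "t (2*i) \<le> t (2*i+1)" using Fmono by (meson not_le order.strict_iff_not)
      have un: "G \<inter> {a..t (2*i+1)} = (G \<inter> {a..t (2*i)}) \<union> (G \<inter> {t (2*i)<..t (2*i+1)})"
        using t1 le by auto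
      have "F (t (2*i+1)) = F (t (2*i)) + measure lborel (G \<inter> {t (2*i)<..t (2*i+1)})"
        unfolding F_def un
        using fmG[of "{a..t (2*i)}"] fmG[of "{t (2*i)<..t (2*i+1)}"]
        by (intro measure_Union) (auto simp: fmeasurable_def)
      then have "measure lborel (G \<inter> {t (2*i)<..t (2*i+1)}) \<noteq> 0" using lt by simp
      then have "G \<inter> {t (2*i)<..t (2*i+1)} \<noteq> {}" by auto
      then show ?thesis by auto
    qed auto
  qed
  then obtain u where u: "\<And>i. i \<le> K \<Longrightarrow> u i \<in> G \<and> t (2*i) < u i \<and> u i \<le> t (2*i+1)"
    by metis
  have ua: "a \<le> u i" if "i \<le> K" for i using u[OF that] G by auto
  have sep1: "h \<le> u j - u i" if "i < j" "j \<le> K" for i j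
  proof -
    have tj: "F (t (2*j)) = real (2*j) * h" using t[of "2*j"] that by simp
    have ti: "F (t (2*i+1)) = real (2*i+1) * h" using t[of "2*i+1"] that by simp
    have "F (u j) \<ge> F (t (2*j))" using u[of j] that Fmono by auto
    moreover have "F (u i) \<le> F (t (2*i+1))" using u[of i] that Fmono by auto
    moreover have "real (2*i+1) * h + h \<le> real (2*j) * h"
    proof -
      have "real (2*i+1) + 1 \<le> real (2*j)" using that by simp
      then show ?thesis using hpos by (metis distrib_right mult_1 mult_right_mono less_imp_le)
    qed
    ultimately have FF: "F (u i) + h \<le> F (u j)" using tj ti by linarith
    have "u i < u j"
    proof (rule ccontr)
      assume "\<not> u i < u j"
      then have "F (u j) \<le> F (u i)" using Fmono by simp
      then show False using FF hpos by simp
    qed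
    then have "F (u j) - F (u i) \<le> u j - u i" using Fdiff ua that by simp
    then show ?thesis using FF by simp
  qed
  show ?thesis
  proof (intro exI[of _ u] conjI allI impI)
    fix i assume "i \<le> K" then show "u i \<in> G" using u by simp
  next
    fix i j assume ij: "i \<le> K" "j \<le> K" "i \<noteq> j"
    show "m / (2 * real K + 2) \<le> \<bar>u i - u j\<bar>"
    proof (cases "i < j")
      case True then show ?thesis using sep1[of i j] ij by (simp add: h_def)
    next
      case False then have "j < i" using ij by simp
      then show ?thesis using sep1[of j i] ij by (simp add: h_def)
    qed
  qed
qed


lemma set_int_bdd:
  fixes g :: "real \<Rightarrow> real"
  assumes "g \<in> borel_measurable lborel" "\<And>s. s \<in> {u..v} \<Longrightarrow> \<bar>g s\<bar> \<le> C"
  shows "set_integrable lborel {u..v} g"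
  unfolding set_integrable_def
  by (rule integrableI_bounded_set_indicator[where B=C]) (use assms in \<open>auto simp: emeasure_lborel_Icc_eq\<close>)

lemma poly_meas: "(\<lambda>s. poly p (s - a)) \<in> borel_measurable (lborel :: real measure)"
proof -
  have "(\<lambda>s. poly p (s - a)) \<in> borel_measurable borel"
    by (intro borel_measurable_continuous_onI continuous_intros)
  then show ?thesis by simp
qed

definition cpoly :: "nat \<Rightarrow> real \<Rightarrow> real" where
  "cpoly K \<rho> = \<rho>^2/8 * (\<rho>/(8*(real K+1)))^(2*K) / (4*(real K+1)^2*4^K)"

lemma cpoly_pos: "0 < \<rho> \<Longrightarrow> 0 < cpoly K \<rho>"
  unfolding cpoly_def by (intro divide_pos_pos mult_pos_pos zero_less_power) auto

lemma set_int_indicator: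
  fixes E :: "real set"
  assumes "E \<in> sets lborel" "E \<subseteq> {u..v}"
  shows "(LINT s:{u..v}|lborel. indicator E s) = measure lborel E"
proof -
  have "(LINT s:{u..v}|lborel. indicator E s) = integral\<^sup>L lborel (indicator E :: real \<Rightarrow> real)"
    unfolding set_lebesgue_integral_def using assms
    by (intro Bochner_Integration.integral_cong) (auto simp: indicator_def)
  also have "\<dots> = measure lborel E" by simp
  finally show ?thesis .
qed

lemma poly_obs:
  fixes \<beta> :: "real \<Rightarrow> real" and p :: "real poly" and K :: nat
  assumes \<beta>m: "\<beta> \<in> borel_measurable lborel" and \<beta>01: "\<And>s. 0 \<le> \<beta> s \<and> \<beta> s \<le> 1"
    and \<rho>: "0 < \<rho>" and L: "0 < L" "L \<le> 1"
    and mass: "\<rho> * L \<le> (LINT s:{a..a+L}|lborel. \<beta> s)"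
    and deg: "degree p \<le> K" and \<gamma>: "0 \<le> \<gamma>" "\<gamma> \<le> \<bar>coeff p j\<bar>"
  shows "cpoly K \<rho> * \<gamma>^2 * L^(2*K+1) \<le> (LINT s:{a..a+L}|lborel. \<beta> s * (poly p (s - a))^2)"
proof -
  define b where "b = a + L"
  define P where "P s = poly p (s - a)" for s
  have Pm: "P \<in> borel_measurable lborel" unfolding P_def by (rule poly_meas)
  have ab: "a \<le> b" using L by (simp add: b_def)
  have Pbdd: "\<exists>C. \<forall>s\<in>{a..b}. \<bar>P s\<bar> \<le> C"
  proof -
    have "compact (P ` {a..b})" unfolding P_def
      by (intro compact_continuous_image) (auto intro!: continuous_intros)
    then show ?thesis using compact_imp_bounded bounded_real by (metis image_eqI)
  qed
  then obtain CP where CP: "\<And>s. s \<in> {a..b} \<Longrightarrow> \<bar>P s\<bar> \<le> CP" by blast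
  have int_main: "set_integrable lborel {a..b} (\<lambda>s. \<beta> s * (P s)^2)"
  proof (rule set_int_bdd[where C="CP^2"])
    show "(\<lambda>s. \<beta> s * (P s)\<^sup>2) \<in> borel_measurable lborel" using \<beta>m Pm by measurable
    fix s assume s: "s \<in> {a..b}"
    have "\<bar>\<beta> s * (P s)\<^sup>2\<bar> = \<beta> s * (P s)\<^sup>2" using \<beta>01[of s] by simp
    also have "\<dots> \<le> 1 * (P s)\<^sup>2" using \<beta>01[of s] by (intro mult_right_mono) auto
    also have "\<dots> \<le> CP^2" using CP[OF s] by (simp add: abs_le_square_iff[symmetric] power2_abs)
    finally show "\<bar>\<beta> s * (P s)\<^sup>2\<bar> \<le> CP^2" .
  qed
  show ?thesis
  proof (cases "\<gamma> = 0")
    case True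
    have "0 \<le> (LINT s:{a..b}|lborel. \<beta> s * (P s)^2)"
    proof -
      have "(LINT s:{a..b}|lborel. (0::real)) \<le> (LINT s:{a..b}|lborel. \<beta> s * (P s)^2)"
        using int_main \<beta>01 by (intro set_integral_mono) (auto simp: set_integrable_def)
      then show ?thesis by simp
    qed
    then show ?thesis using True by (simp add: b_def P_def)
  next
    case False
    then have \<gamma>pos: "0 < \<gamma>" using \<gamma> by simp
    define E where "E = {s\<in>{a..b}. \<rho>/2 \<le> \<beta> s}"
    define h where "h = (\<rho> * L / 4) / (2 * real K + 2)"
    define \<delta> where "\<delta> = \<gamma> * h^K / (2 * (real K + 1) * 2^K)"
    define G where "G = {s\<in>{a..b}. \<rho>/2 \<le> \<beta> s \<and> (P s)^2 < \<delta>^2}"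
    define S where "S = {s\<in>{a..b}. \<rho>/2 \<le> \<beta> s \<and> \<delta>^2 \<le> (P s)^2}"
    have hpos: "0 < h" using \<rho> L unfolding h_def by (intro divide_pos_pos) auto
    have \<delta>pos: "0 < \<delta>" using \<gamma>pos hpos unfolding \<delta>_def by (intro divide_pos_pos) auto
    have Em: "E \<in> sets lborel" unfolding E_def using \<beta>m by measurable
    have Gm: "G \<in> sets lborel" unfolding G_def using \<beta>m Pm by measurable
    have Sm: "S \<in> sets lborel" unfolding S_def using \<beta>m Pm by measurable
    have EGS: "E = G \<union> S" "G \<inter> S = {}" unfolding E_def G_def S_def by auto
    have Esub: "E \<subseteq> {a..b}" "G \<subseteq> {a..b}" "S \<subseteq> {a..b}"
      unfolding E_def G_def S_def by auto
    have int_ind: "set_integrable lborel {a..b} (\<lambda>s. c * indicator A s)" if "A \<in> sets lborel" for c :: real and A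
      by (rule set_int_bdd[where C="\<bar>c\<bar>"]) (use that in \<open>auto simp: indicator_def\<close>)
    have int_const: "set_integrable lborel {a..b} (\<lambda>s. c)" for c :: real
      by (rule set_int_bdd[where C="\<bar>c\<bar>"]) auto
    have int_beta: "set_integrable lborel {a..b} \<beta>"
      by (rule set_int_bdd[where C=1]) (use \<beta>m \<beta>01 in auto)
    have measE: "\<rho> * L / 2 \<le> measure lborel E"
    proof -
      have "\<rho> * L \<le> (LINT s:{a..b}|lborel. \<beta> s)" using mass by (simp add: b_def)
      also have "\<dots> \<le> (LINT s:{a..b}|lborel. 1 * indicator E s + \<rho>/2)"
      proof (rule set_integral_mono[OF int_beta])
        show "set_integrable lborel {a..b} (\<lambda>s. 1 * indicator E s + \<rho>/2)"
          using int_ind[OF Em, of 1] int_const by (rule set_integral_add)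
        fix s assume "s \<in> {a..b}"
        then show "\<beta> s \<le> 1 * indicator E s + \<rho>/2" using \<beta>01[of s]
          using \<rho> by (cases "\<rho>/2 \<le> \<beta> s") (auto simp: E_def indicator_def)
      qed
      also have "\<dots> = measure lborel E + \<rho>/2 * L"
        using set_int_indicator[OF Em Esub(1)] int_ind[OF Em, of 1] int_const ab
        by (simp add: set_integral_add set_integral_const b_def)
      finally show ?thesis by simp
    qed
    have measG: "measure lborel G < \<rho> * L / 4"
    proof (rule ccontr)
      assume "\<not> measure lborel G < \<rho> * L / 4"
      then have mG: "\<rho> * L / 4 \<le> measure lborel G" by simp
      obtain u :: "nat \<Rightarrow> real" where uG: "\<And>i. i \<le> K \<Longrightarrow> u i \<in> G"
        and usep: "\<And>i j. i \<le> K \<Longrightarrow> j \<le> K \<Longrightarrow> i \<noteq> j \<Longrightarrow> h \<le> \<bar>u i - u j\<bar>"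
        using separated_points[OF Gm Esub(2) _ mG, of K] \<rho> L unfolding h_def by auto
      have "\<bar>coeff p j\<bar> \<le> real (K+1) * \<delta> * 2^K / h^K"
      proof (rule lagrange_coeff_bound[OF deg, where u="\<lambda>i. u i - a"])
        fix i assume i: "i \<le> K"
        then have "u i \<in> {a..b}" using uG[OF i] Esub(2) by blast
        then show "\<bar>u i - a\<bar> \<le> 1" using L by (auto simp: b_def)
        have "(P (u i))^2 < \<delta>^2" using uG[OF i] by (simp add: G_def)
        then have "\<bar>P (u i)\<bar> < \<delta>" using \<delta>pos
          by (metis abs_of_pos power2_abs power_less_imp_less_base abs_ge_zero)
        then show "\<bar>poly p (u i - a)\<bar> \<le> \<delta>" by (simp add: P_def)
      next
        fix i j assume "i \<le> K" "j \<le> K" "i \<noteq> j"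
        then show "h \<le> \<bar>u i - a - (u j - a)\<bar>" using usep by simp
      qed (use hpos in auto)
      also have "\<dots> = \<gamma> / 2"
      proof -
        have hK: "0 < h^K" "0 < (2::real)^K" "0 < real K + 1" using hpos by auto
        have "real (K+1) * \<delta> * 2^K / h^K
              = (real K + 1) * 2^K * h^K * \<gamma> / ((real K + 1) * 2^K * h^K * 2)"
          unfolding \<delta>_def using hK by (simp add: field_simps)
        also have "\<dots> = \<gamma> / 2" using hK hpos by simp
        finally show ?thesis .
      qed
      finally show False using \<gamma> \<gamma>pos by simp
    qed
    have measS: "\<rho> * L / 4 \<le> measure lborel S"
    proof -
      have "measure lborel E = measure lborel G + measure lborel S"
        unfolding EGS(1) using EGS(2) fmeas_sub[OF Gm Esub(2)] fmeas_sub[OF Sm Esub(3)]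
        by (intro measure_Union) (auto simp: fmeasurable_def)
      then show ?thesis using measE measG by simp
    qed
    have "\<rho>/2 * \<delta>^2 * (\<rho> * L / 4) \<le> (LINT s:{a..b}|lborel. (\<rho>/2 * \<delta>^2) * indicator S s)"
    proof -
      have "\<delta>^2 * (\<rho> * L) \<le> \<delta>^2 * (measure lborel S * 4)"
        using measS by (intro mult_left_mono) auto
      then show ?thesis
        using set_int_indicator[OF Sm Esub(3)] measS \<rho> int_ind[OF Sm, of 1]
        by (simp add: set_integral_mult_right[symmetric] algebra_simps)
    qed
    also have "\<dots> \<le> (LINT s:{a..b}|lborel. \<beta> s * (P s)^2)"
    proof (rule set_integral_mono[OF int_ind[OF Sm] int_main])
      fix s assume s: "s \<in> {a..b}"
      show "\<rho>/2 * \<delta>^2 * indicator S s \<le> \<beta> s * (P s)^2"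
      proof (cases "s \<in> S")
        case True
        then have "\<rho>/2 \<le> \<beta> s" "\<delta>^2 \<le> (P s)^2" by (auto simp: S_def)
        then have "\<rho>/2 * \<delta>^2 \<le> \<beta> s * (P s)^2" using \<rho> by (intro mult_mono) auto
        then show ?thesis using True by simp
      next
        case False
        then show ?thesis using \<beta>01[of s] by simp
      qed
    qed
    finally have low: "\<rho>/2 * \<delta>^2 * (\<rho> * L / 4) \<le> (LINT s:{a..b}|lborel. \<beta> s * (P s)^2)" .
    have eqc: "\<rho>/2 * \<delta>^2 * (\<rho> * L / 4) = cpoly K \<rho> * \<gamma>^2 * L^(2*K+1)"
    proof -
      have f4: "(4::real)^K = 2^K * 2^K" by (simp add: power_mult_distrib[symmetric])
      show ?thesis
      unfolding \<delta>_def h_def cpoly_def f4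
      by (simp add: field_simps power_mult_distrib power_mult power2_eq_square)
    qed
    have "cpoly K \<rho> * \<gamma>^2 * L^(2*K+1) \<le> (LINT s:{a..b}|lborel. \<beta> s * (P s)^2)"
      using low eqc by linarith
    then show ?thesis by (simp only: b_def P_def)
  qed
qed


lemma set_int_cont_mult:
  fixes \<beta> \<phi> :: "real \<Rightarrow> real"
  assumes \<beta>m: "\<beta> \<in> borel_measurable lborel" and \<beta>b: "\<And>s. \<bar>\<beta> s\<bar> \<le> 1"
    and \<phi>c: "continuous_on {u..v} \<phi>"
  shows "set_integrable lborel {u..v} (\<lambda>s. \<beta> s * \<phi> s)"
proof -
  have "compact (\<phi> ` {u..v})" by (intro compact_continuous_image \<phi>c) auto
  then obtain C where C: "\<And>s. s \<in> {u..v} \<Longrightarrow> \<bar>\<phi> s\<bar> \<le> C"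
    using compact_imp_bounded bounded_real by (metis image_eqI)
  have m1: "(\<lambda>s. indicator {u..v} s *\<^sub>R \<phi> s) \<in> borel_measurable borel"
    by (rule borel_measurable_continuous_on_indicator[OF _ \<phi>c]) auto
  have m2: "(\<lambda>s. \<beta> s * (indicator {u..v} s *\<^sub>R \<phi> s)) \<in> borel_measurable lborel"
    using \<beta>m m1 by simp
  have "integrable lborel (\<lambda>s. \<beta> s * (indicator {u..v} s *\<^sub>R \<phi> s))"
  proof (rule integrableI_bounded_set[where A="{u..v}" and B=C])
    show "(\<lambda>s. \<beta> s * (indicator {u..v} s *\<^sub>R \<phi> s)) \<in> borel_measurable lborel" by (rule m2)
    show "AE x\<in>{u..v} in lborel. norm (\<beta> x * (indicator {u..v} x *\<^sub>R \<phi> x)) \<le> C"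
    proof (rule AE_I2, rule impI)
      fix x assume x: "x \<in> {u..v}"
      have "\<bar>\<beta> x * \<phi> x\<bar> \<le> 1 * C"
        unfolding abs_mult using \<beta>b[of x] C[OF x] by (intro mult_mono) auto
      then show "norm (\<beta> x * (indicator {u..v} x *\<^sub>R \<phi> x)) \<le> C" using x by simp
    qed
  qed (auto simp: emeasure_lborel_Icc_eq)
  then show ?thesis unfolding set_integrable_def
    by (rule Bochner_Integration.integrable_cong[THEN iffD1, rotated -1]) (auto simp: indicator_def)
qed

locale sys =
  fixes A :: "real^'n^'n" and B :: "real^'r^'n" and \<alpha> :: "real \<Rightarrow> real" and z :: "real \<Rightarrow> real^'n"
  assumes skew: "transpose A = - A"
    and alpha_meas: "\<alpha> \<in> borel_measurable (restrict_space lborel {0..})"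
    and alpha_range: "\<And>t. t \<ge> 0 \<Longrightarrow> 0 \<le> \<alpha> t \<and> \<alpha> t \<le> 1"
    and sol: "is_solution A B \<alpha> z"
begin

definition "al s = indicator {0..} s * \<alpha> s"
definition "M = B ** transpose B"
definition "f s = A *v z s - \<alpha> s *\<^sub>R (M *v z s)"
definition "V t = (norm (z t))^2"
definition "w s = transpose B *v z s"
definition "dis s = al s * (norm (w s))^2"

lemma al_meas: "al \<in> borel_measurable lborel"
proof -
  have "(\<lambda>x. indicator {0..} x *\<^sub>R \<alpha> x) \<in> borel_measurable lborel"
    using alpha_meas by (subst borel_measurable_restrict_space_iff[symmetric]) auto
  then show ?thesis unfolding al_def by simp
qed

lemma al_range: "0 \<le> al s \<and> al s \<le> 1"
  using alpha_range[of s] by (auto simp: al_def indicator_def)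

lemma al_abs: "\<bar>al s\<bar> \<le> 1" using al_range[of s] by simp

lemma al_eq: "0 \<le> s \<Longrightarrow> al s = \<alpha> s" by (simp add: al_def)

lemma f_int0: "0 \<le> t \<Longrightarrow> (f has_integral (z t - z 0)) {0..t}"
  using sol unfolding is_solution_def f_def M_def by auto

lemma f_int: assumes "0 \<le> u" "u \<le> v" shows "(f has_integral (z v - z u)) {u..v}"
proof -
  have iv: "f integrable_on {0..v}" using f_int0[of v] assms by (meson order_trans has_integral_integrable)
  have "integral {0..u} f + integral {u..v} f = integral {0..v} f"
    using assms iv by (intro Henstock_Kurzweil_Integration.integral_combine) auto
  moreover have "integral {0..u} f = z u - z 0" "integral {0..v} f = z v - z 0"
    using f_int0[of u] f_int0[of v] assms by (auto intro: integral_unique)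
  ultimately have "integral {u..v} f = z v - z u" by (simp add: algebra_simps)
  moreover have "f integrable_on {u..v}"
    by (rule integrable_subinterval_real[OF iv]) (use assms in auto)
  ultimately show ?thesis by (metis integrable_integral)
qed

lemma z_cont: "continuous_on {0..T} z"
proof (cases "0 \<le> T")
  case True
  have iv: "f integrable_on {0..T}" using f_int0[OF True] by blast
  have "continuous_on {0..T} (\<lambda>t. z 0 + integral {0..t} f)"
    by (intro continuous_intros indefinite_integral_continuous_1 iv)
  moreover have "z 0 + integral {0..t} f = z t" if "t \<in> {0..T}" for t
  proof -
    have "integral {0..t} f = z t - z 0" using f_int0[of t] that by (auto intro: integral_unique)
    then show ?thesis by simp
  qed
  ultimately show ?thesis using continuous_on_cong by (metis (no_types, lifting))
next
  case False then show ?thesis by simp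
qed

lemma z_cont_sub: "0 \<le> u \<Longrightarrow> continuous_on {u..v} z"
  by (rule continuous_on_subset[OF z_cont[of v]]) auto

lemma neg_mv: "(- C) *v y = - (C *v y)" for C :: "real^'n^'n" and y :: "real^'n"
proof -
  have "\<And>i. (\<Sum>j\<in>UNIV. - C $ i $ j * y $ j) = - (\<Sum>j\<in>UNIV. C $ i $ j * y $ j)"
    by (subst sum_negf[symmetric]) simp
  then show ?thesis by (simp add: matrix_vector_mult_def vec_eq_iff)
qed

lemma skew0: "y \<bullet> (A *v y) = 0"
proof -
  have "y \<bullet> (A *v y) = (y v* A) \<bullet> y" by (simp add: dot_lmul_matrix)
  also have "y v* A = transpose A *v y"
    using vector_transpose_matrix[of y "transpose A"] by simp
  also have "\<dots> = - (A *v y)" using skew by (simp add: neg_mv)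
  finally have "y \<bullet> (A *v y) = - ((A *v y) \<bullet> y)" by simp
  then show ?thesis by (simp add: inner_commute)
qed

lemma Mform: "y \<bullet> (M *v y) = (norm (transpose B *v y))^2"
proof -
  have "y \<bullet> (M *v y) = y \<bullet> (B *v (transpose B *v y))"
    by (simp only: M_def matrix_vector_mul_assoc)
  also have "\<dots> = (y v* B) \<bullet> (transpose B *v y)" by (rule dot_lmul_matrix[symmetric])
  also have "y v* B = transpose B *v y"
    using vector_transpose_matrix[of y "transpose B"] by (simp only: transpose_transpose)
  finally show ?thesis by (simp only: power2_norm_eq_inner)
qed

lemma zf: "0 \<le> s \<Longrightarrow> z s \<bullet> f s = - dis s"
  by (simp add: f_def inner_diff_right skew0 Mform dis_def w_def al_eq)

lemma aux3: "x \<le> q \<Longrightarrow> -x \<le> q \<Longrightarrow> n \<le> q \<Longrightarrow> 0 \<le> n \<Longrightarrow> \<bar>2*x + n\<bar> \<le> 3*(q::real)"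
  by arith

lemma lin_bound: "\<exists>C>0. \<forall>y. norm (D *v y) \<le> C * norm y" for D :: "real^'a^'b"
  using bounded_linear.pos_bounded[OF matrix_vector_mul_bounded_linear[of D]]
  by (metis mult.commute)

lemma w_cont: assumes "0 \<le> u" shows "continuous_on {u..v} w"
  unfolding w_def
  by (rule linear_continuous_on_compose[OF z_cont_sub[OF assms] matrix_vector_mul_linear])

lemma dis_set_int: "0 \<le> u \<Longrightarrow> set_integrable lborel {u..v} dis"
  unfolding dis_def
  by (rule set_int_cont_mult[OF al_meas al_abs]) (intro continuous_intros w_cont)

lemma dis_int: "0 \<le> u \<Longrightarrow> dis integrable_on {u..v}"
  using dis_set_int set_borel_integral_eq_integral(1) by blast

lemma dis_nonneg: "0 \<le> dis s" using al_range[of s] by (simp add: dis_def)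

lemma z_bound: "\<exists>Z\<ge>0. \<forall>s\<in>{0..T}. norm (z s) \<le> Z"
proof -
  have "compact (z ` {0..T})" by (intro compact_continuous_image z_cont) auto
  then obtain Z where "\<forall>y\<in>z ` {0..T}. norm y \<le> Z" using compact_imp_bounded bounded_iff by metis
  then show ?thesis by (intro exI[of _ "max Z 0"]) auto
qed

lemma energy0:
  assumes t: "0 \<le> t"
  shows "V t = V 0 - 2 * integral {0..t} dis"
proof -
  obtain Z where Z: "Z \<ge> 0" "\<And>s. s \<in> {0..t} \<Longrightarrow> norm (z s) \<le> Z" using z_bound[of t] by auto
  obtain CA where CA: "CA > 0" "\<And>y. norm (A *v y) \<le> CA * norm y" using lin_bound[of A] by auto
  obtain CM where CM: "CM > 0" "\<And>y. norm (M *v y) \<le> CM * norm y" using lin_bound[of M] by auto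
  define Cf where "Cf = (CA + CM) * Z"
  have Cf0: "0 \<le> Cf" using CA CM Z by (simp add: Cf_def)
  have fb: "norm (f s) \<le> Cf" if s: "s \<in> {0..t}" for s
  proof -
    have a: "0 \<le> \<alpha> s" "\<alpha> s \<le> 1" using alpha_range[of s] s by auto
    have "norm (f s) \<le> norm (A *v z s) + norm (\<alpha> s *\<^sub>R (M *v z s))"
      unfolding f_def by (rule norm_triangle_ineq4)
    also have "\<dots> \<le> CA * norm (z s) + 1 * (CM * norm (z s))"
    proof (rule add_mono)
      show "norm (A *v z s) \<le> CA * norm (z s)" by (rule CA(2))
      have "norm (\<alpha> s *\<^sub>R (M *v z s)) = \<alpha> s * norm (M *v z s)" using a by simp
      also have "\<dots> \<le> 1 * (CM * norm (z s))" using a CM by (intro mult_mono) auto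
      finally show "norm (\<alpha> s *\<^sub>R (M *v z s)) \<le> 1 * (CM * norm (z s))" .
    qed
    also have "\<dots> \<le> CA * Z + CM * Z"
      using Z(2)[OF s] CA CM by (auto intro!: add_mono mult_left_mono)
    finally show ?thesis by (simp add: Cf_def distrib_right)
  qed
  have lip: "norm (z v - z u) \<le> Cf * (v - u)" if "0 \<le> u" "u \<le> v" "v \<le> t" for u v
  proof -
    have "(f has_integral (z v - z u)) (cbox u v)" using f_int[OF that(1,2)] by simp
    then have "norm (z v - z u) \<le> Cf * Henstock_Kurzweil_Integration.content (cbox u v)"
      by (rule has_integral_bound[OF Cf0]) (use fb that in auto)
    then show ?thesis using that by simp
  qed
  define \<Phi> where "\<Phi> s = V s + 2 * integral {0..s} dis" for s
  have step: "\<bar>\<Phi> v - \<Phi> u\<bar> \<le> 3 * Cf^2 * (v - u)^2" if uv: "0 \<le> u" "u \<le> v" "v \<le> t" for u v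
  proof -
    define d where "d = z v - z u"
    define I where "I = integral {u..v} dis"
    have comb: "integral {0..u} dis + integral {u..v} dis = integral {0..v} dis"
      using uv dis_int[of 0 v] by (intro Henstock_Kurzweil_Integration.integral_combine) auto
    have VV: "V v - V u = 2 * (z u \<bullet> d) + (norm d)^2"
      unfolding V_def d_def power2_norm_eq_inner
      by (simp add: inner_diff_left inner_diff_right inner_commute)
    have PP: "\<Phi> v - \<Phi> u = 2 * (z u \<bullet> d + I) + (norm d)^2"
      using VV comb unfolding \<Phi>_def I_def by (simp add: algebra_simps)
    have h1: "((\<lambda>s. z u \<bullet> f s) has_integral (z u \<bullet> d)) {u..v}"
      using has_integral_linear[OF f_int[OF uv(1,2)] bounded_linear_inner_right[of "z u"]]
      by (simp add: d_def o_def)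
    have h2: "(dis has_integral I) {u..v}" unfolding I_def using dis_int[of u v] uv by auto
    have h3: "((\<lambda>s. (z u - z s) \<bullet> f s) has_integral (z u \<bullet> d + I)) {u..v}"
    proof -
      have "((\<lambda>s. z u \<bullet> f s + dis s) has_integral (z u \<bullet> d + I)) {u..v}"
        by (rule has_integral_add[OF h1 h2])
      moreover have "z u \<bullet> f s + dis s = (z u - z s) \<bullet> f s" if "s \<in> {u..v}" for s
      proof -
        have "z s \<bullet> f s = - dis s" using zf[of s] that uv by auto
        then show ?thesis by (simp add: inner_diff_left)
      qed
      ultimately show ?thesis
        using has_integral_cong[of "{u..v}" "\<lambda>s. z u \<bullet> f s + dis s" "\<lambda>s. (z u - z s) \<bullet> f s" "z u \<bullet> d + I"]
        by blast
    qed
    have "norm (z u \<bullet> d + I) \<le> (Cf * (v - u) * Cf) * Henstock_Kurzweil_Integration.content (cbox u v)"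
    proof (rule has_integral_bound)
      show "0 \<le> Cf * (v - u) * Cf" using Cf0 uv by simp
      show "((\<lambda>s. (z u - z s) \<bullet> f s) has_integral (z u \<bullet> d + I)) (cbox u v)" using h3 by simp
      fix s assume s: "s \<in> cbox u v"
      then have s': "u \<le> s" "s \<le> v" by auto
      have "norm ((z u - z s) \<bullet> f s) \<le> norm (z u - z s) * norm (f s)"
        by (simp add: Cauchy_Schwarz_ineq2)
      also have "\<dots> \<le> (Cf * (v - u)) * Cf"
      proof (rule mult_mono)
        have "norm (z u - z s) = norm (z s - z u)" by (simp add: norm_minus_commute)
        also have "\<dots> \<le> Cf * (s - u)" using lip[of u s] uv s' by simp
        also have "\<dots> \<le> Cf * (v - u)" using Cf0 s' by (intro mult_left_mono) auto
        finally show "norm (z u - z s) \<le> Cf * (v - u)" .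
        show "norm (f s) \<le> Cf" using fb[of s] uv s' by simp
      qed (use Cf0 uv in auto)
      finally show "norm ((z u - z s) \<bullet> f s) \<le> Cf * (v - u) * Cf" .
    qed
    then have b1: "\<bar>z u \<bullet> d + I\<bar> \<le> Cf^2 * (v - u)^2" using uv
      by (simp add: power2_eq_square algebra_simps)
    have "norm d \<le> Cf * (v - u)" unfolding d_def using lip uv by simp
    then have "(norm d)^2 \<le> (Cf * (v - u))^2" by (intro power_mono) auto
    then have b2: "(norm d)^2 \<le> Cf^2 * (v - u)^2" by (simp add: power_mult_distrib)
    have nd: "0 \<le> (norm d)^2" by simp
    have b1': "z u \<bullet> d + I \<le> Cf^2 * (v - u)^2" "- (z u \<bullet> d + I) \<le> Cf^2 * (v - u)^2"
      using b1 by (simp_all add: abs_le_iff)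
    have aux: "\<And>x q n::real. x \<le> q \<Longrightarrow> -x \<le> q \<Longrightarrow> n \<le> q \<Longrightarrow> 0 \<le> n \<Longrightarrow> \<bar>2*x + n\<bar> \<le> 3*q"
      by arith
    have "\<bar>2 * (z u \<bullet> d + I) + (norm d)^2\<bar> \<le> 3 * (Cf^2 * (v - u)^2)"
      by (rule aux3[OF b1' b2 nd])
    then show ?thesis unfolding PP by (simp add: mult.assoc)
  qed
  have tele: "\<bar>\<Phi> t - \<Phi> 0\<bar> \<le> 3 * Cf^2 * t^2 / real n" if n: "n > 0" for n
  proof -
    define p where "p i = real i * t / real n" for i
    have p0: "p 0 = 0" and pn: "p n = t" using n by (auto simp: p_def)
    have pstep: "p (Suc i) - p i = t / real n" for i by (simp add: p_def diff_divide_distrib[symmetric] algebra_simps)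
    have "\<Phi> t - \<Phi> 0 = (\<Sum>i<n. \<Phi> (p (Suc i)) - \<Phi> (p i))"
      using sum_lessThan_telescope[of "\<lambda>i. \<Phi> (p i)" n] p0 pn by simp
    also have "\<bar>\<dots>\<bar> \<le> (\<Sum>i<n. \<bar>\<Phi> (p (Suc i)) - \<Phi> (p i)\<bar>)" by (rule sum_abs)
    also have "\<dots> \<le> (\<Sum>i<n. 3 * Cf^2 * (t / real n)^2)"
    proof (rule sum_mono)
      fix i assume "i \<in> {..<n}"
      then have i: "Suc i \<le> n" by simp
      have "0 \<le> p i" using t by (simp add: p_def)
      moreover have "p i \<le> p (Suc i)" using pstep[of i] t by (metis diff_ge_0_iff_ge divide_nonneg_nonneg of_nat_0_le_iff)
      moreover have "p (Suc i) \<le> t"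
      proof -
        have "real (Suc i) * t \<le> real n * t" using i t by (intro mult_right_mono) auto
        then show ?thesis using n by (simp add: p_def field_simps)
      qed
      ultimately show "\<bar>\<Phi> (p (Suc i)) - \<Phi> (p i)\<bar> \<le> 3 * Cf^2 * (t / real n)^2"
        using step[of "p i" "p (Suc i)"] pstep[of i] by simp
    qed
    also have "\<dots> = 3 * Cf^2 * t^2 / real n" using n by (simp add: power2_eq_square field_simps)
    finally show ?thesis .
  qed
  have "\<Phi> t = \<Phi> 0"
  proof (rule ccontr)
    assume ne: "\<Phi> t \<noteq> \<Phi> 0"
    define e where "e = \<bar>\<Phi> t - \<Phi> 0\<bar>"
    have e: "0 < e" using ne by (simp add: e_def)
    obtain n :: nat where n: "3 * Cf^2 * t^2 / e < real n" using reals_Archimedean2 by blast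
    have "0 \<le> 3 * Cf^2 * t^2 / e" using e by simp
    then have npos: "n > 0" using n by (cases n) auto
    have "e \<le> 3 * Cf^2 * t^2 / real n" using tele[OF npos] by (simp add: e_def)
    then have "e * real n \<le> 3 * Cf^2 * t^2" using npos by (simp add: field_simps)
    moreover have "3 * Cf^2 * t^2 < e * real n" using n e by (simp add: field_simps)
    ultimately show False by simp
  qed
  then show ?thesis by (simp add: \<Phi>_def)
qed

lemma energy:
  assumes "0 \<le> u" "u \<le> v"
  shows "V u - V v = 2 * integral {u..v} dis"
proof -
  have "integral {0..u} dis + integral {u..v} dis = integral {0..v} dis"
    using assms dis_int[of 0 v] by (intro Henstock_Kurzweil_Integration.integral_combine) auto
  then show ?thesis using energy0[of u] energy0[of v] assms by simp
qed

lemma V_mono: assumes "0 \<le> u" "u \<le> v" shows "V v \<le> V u"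
proof -
  have "0 \<le> integral {u..v} dis"
    using dis_int[of u v] assms dis_nonneg by (intro integral_nonneg) auto
  then show ?thesis using energy[OF assms] by simp
qed

lemma z_mono: assumes "0 \<le> u" "u \<le> v" shows "norm (z v) \<le> norm (z u)"
  using V_mono[OF assms] unfolding V_def by (simp add: power_mono_iff)

end


primrec Ck :: "real \<Rightarrow> nat \<Rightarrow> real" where
  "Ck c 0 = c + 1"
| "Ck c (Suc k) = c * Ck c k + 1"

lemma Ck_nonneg: "0 \<le> c \<Longrightarrow> 0 \<le> Ck c k" by (induction k) auto

lemma mpow_0: "mpow A 0 = mat 1" by (simp add: mpow_def)
lemma mpow_Suc: "mpow A (Suc j) = A ** mpow A j" by (simp add: mpow_def)

definition Pol :: "real^'n^'n \<Rightarrow> real^'n \<Rightarrow> real \<Rightarrow> nat \<Rightarrow> real \<Rightarrow> real^'n" where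
  "Pol A x a k t = (\<Sum>j\<le>k. ((t - a)^j / fact j) *\<^sub>R (mpow A j *v x))"

lemma Pol_0: "Pol A x a 0 t = x" by (simp add: Pol_def mpow_0)
lemma Pol_a: "Pol A x a k a = x"
  by (induction k) (auto simp: Pol_def mpow_0)

lemma Pol_deriv:
  "((Pol A x a (Suc k)) has_vector_derivative (A *v Pol A x a k t)) (at t within S)"
proof -
  define v where "v j = mpow A j *v x" for j
  define g where "g j = (real j * (t - a)^(j - 1) / fact j) *\<^sub>R v j" for j
  have d: "((\<lambda>t. ((t - a)^j / fact j) *\<^sub>R v j) has_vector_derivative g j) (at t within S)" for j
    unfolding g_def
    by (auto intro!: derivative_eq_intros simp: field_simps)
  have "(Pol A x a (Suc k) has_vector_derivative (\<Sum>j\<le>Suc k. g j)) (at t within S)"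
    unfolding Pol_def v_def[symmetric]
    by (rule has_vector_derivative_sum) (rule d)
  moreover have "(\<Sum>j\<le>Suc k. g j) = A *v Pol A x a k t"
  proof -
    have "(\<Sum>j\<le>Suc k. g j) = g 0 + (\<Sum>j\<le>k. g (Suc j))" by (rule sum.atMost_Suc_shift)
    also have "\<dots> = (\<Sum>j\<le>k. ((t - a)^j / fact j) *\<^sub>R v (Suc j))"
      by (simp add: g_def)
    also have "\<dots> = A *v Pol A x a k t"
      by (simp add: Pol_def vec.sum matrix_vector_mult_scaleR v_def mpow_Suc matrix_vector_mul_assoc)
    finally show ?thesis .
  qed
  ultimately show ?thesis by simp
qed

lemma Pol_cont: "continuous_on S (Pol A x a k)"
  unfolding Pol_def by (intro continuous_intros) auto

context sys begin

definition "g s = \<alpha> s *\<^sub>R (M *v z s)"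
definition "nA = onorm ((*v) A)"

lemma nA: "norm (A *v y) \<le> nA * norm y" "0 \<le> nA"
  using onorm[OF matrix_vector_mul_bounded_linear] onorm_pos_le[OF matrix_vector_mul_bounded_linear]
  by (auto simp: nA_def)

lemma Az_int: "0 \<le> u \<Longrightarrow> (\<lambda>s. A *v z s) integrable_on {u..v}"
  by (intro integrable_continuous_real linear_continuous_on_compose[OF z_cont_sub matrix_vector_mul_linear])

lemma g_int: assumes "0 \<le> u" "u \<le> v"
  shows "(g has_integral (integral {u..v} (\<lambda>s. A *v z s) - (z v - z u))) {u..v}"
proof -
  have "((\<lambda>s. A *v z s - f s) has_integral (integral {u..v} (\<lambda>s. A *v z s) - (z v - z u))) {u..v}"
    using Az_int[OF assms(1)] f_int[OF assms] by (intro has_integral_diff) auto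
  moreover have "A *v z s - f s = g s" for s by (simp add: f_def g_def)
  ultimately show ?thesis by simp
qed

lemma zdiff: assumes "0 \<le> u" "u \<le> v"
  shows "z v - z u = integral {u..v} (\<lambda>s. A *v z s) - integral {u..v} g"
  using integral_unique[OF g_int[OF assms]] by simp

lemma approx:
  assumes a0: "0 \<le> a" and ab: "b - a \<le> 1"
    and J: "\<And>t. t \<in> {a..b} \<Longrightarrow> norm (integral {a..t} g) \<le> J"
  shows "t \<in> {a..b} \<Longrightarrow> norm (z t - Pol A (z a) a k t) \<le> Ck nA k * ((t - a)^(k+1) * norm (z a) + J)"
proof (induction k arbitrary: t)
  case 0
  then have t: "a \<le> t" "t \<le> b" by auto
  have "norm (integral {a..t} (\<lambda>s. A *v z s)) \<le> (nA * norm (z a)) * Henstock_Kurzweil_Integration.content (cbox a t)"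
  proof (rule has_integral_bound)
    show "0 \<le> nA * norm (z a)" using nA by simp
    show "((\<lambda>s. A *v z s) has_integral integral {a..t} (\<lambda>s. A *v z s)) (cbox a t)"
      using Az_int[OF a0, of t] by auto
    fix s assume "s \<in> cbox a t"
    then have s: "a \<le> s" by auto
    have "norm (A *v z s) \<le> nA * norm (z s)" by (rule nA)
    also have "\<dots> \<le> nA * norm (z a)" using z_mono[OF a0 s] nA by (intro mult_left_mono) auto
    finally show "norm (A *v z s) \<le> nA * norm (z a)" .
  qed
  then have i1: "norm (integral {a..t} (\<lambda>s. A *v z s)) \<le> nA * norm (z a) * (t - a)" using t by simp
  have "norm (z t - Pol A (z a) a 0 t) = norm (integral {a..t} (\<lambda>s. A *v z s) - integral {a..t} g)"
    using zdiff[OF a0 t(1)] by (simp add: Pol_0)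
  also have "\<dots> \<le> nA * norm (z a) * (t - a) + J"
    using norm_triangle_ineq4 i1 J[OF 0] by (smt (verit))
  also have "\<dots> \<le> Ck nA 0 * ((t - a)^(0+1) * norm (z a) + J)"
  proof -
    have J0: "0 \<le> J" using J[OF 0] norm_ge_zero order_trans by blast
    have f1: "0 \<le> J * nA" using J0 nA(2) by simp
    have f2: "a * norm (z a) \<le> t * norm (z a)" using t by (simp add: mult_right_mono)
    show ?thesis using f1 f2 by (simp add: algebra_simps)
  qed
  finally show ?case .
next
  case (Suc k)
  then have t: "a \<le> t" "t \<le> b" by auto
  define x where "x = z a"
  have Ck0: "0 \<le> Ck nA k" using Ck_nonneg nA(2) by simp
  have J0: "0 \<le> J" using J[of a] t by (meson atLeastAtMost_iff norm_ge_zero order_trans order_refl)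
  have ftc: "((\<lambda>s. A *v Pol A x a k s) has_integral (Pol A x a (Suc k) t - x)) {a..t}"
    using fundamental_theorem_of_calculus[OF t(1), of "Pol A x a (Suc k)" "\<lambda>s. A *v Pol A x a k s"]
      Pol_deriv Pol_a by metis
  have cz: "continuous_on {a..t} (\<lambda>s. A *v (z s - Pol A x a k s))"
    by (intro linear_continuous_on_compose[OF _ matrix_vector_mul_linear] continuous_intros
        z_cont_sub[OF a0] Pol_cont)
  have eq: "z t - Pol A x a (Suc k) t = integral {a..t} (\<lambda>s. A *v (z s - Pol A x a k s)) - integral {a..t} g"
  proof -
    have "integral {a..t} (\<lambda>s. A *v (z s - Pol A x a k s))
        = integral {a..t} (\<lambda>s. A *v z s) - integral {a..t} (\<lambda>s. A *v Pol A x a k s)"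
      using Az_int[OF a0, of t] ftc
      by (simp add: matrix_vector_mult_diff_distrib integral_diff has_integral_integrable)
    note e0 = this
    have "z t - Pol A x a (Suc k) t = (z t - z a) - (Pol A x a (Suc k) t - x)"
      by (simp add: x_def algebra_simps)
    also have "\<dots> = (integral {a..t} (\<lambda>s. A *v z s) - integral {a..t} g)
                      - integral {a..t} (\<lambda>s. A *v Pol A x a k s)"
      using zdiff[OF a0 t(1)] integral_unique[OF ftc] by simp
    also have "\<dots> = (integral {a..t} (\<lambda>s. A *v z s) - integral {a..t} (\<lambda>s. A *v Pol A x a k s))
                      - integral {a..t} g"
      by (simp add: algebra_simps)
    also have "\<dots> = integral {a..t} (\<lambda>s. A *v (z s - Pol A x a k s)) - integral {a..t} g"
      using e0 by simp
    finally show ?thesis .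
  qed
  have "norm (integral {a..t} (\<lambda>s. A *v (z s - Pol A x a k s)))
        \<le> (nA * (Ck nA k * ((t - a)^(k+1) * norm x + J))) * Henstock_Kurzweil_Integration.content (cbox a t)"
  proof (rule has_integral_bound)
    show "0 \<le> nA * (Ck nA k * ((t - a)^(k+1) * norm x + J))"
      using nA(2) Ck0 J0 t by simp
    show "((\<lambda>s. A *v (z s - Pol A x a k s)) has_integral
        integral {a..t} (\<lambda>s. A *v (z s - Pol A x a k s))) (cbox a t)"
      using integrable_continuous_real[OF cz] by auto
    fix s assume "s \<in> cbox a t"
    then have s: "a \<le> s" "s \<le> t" by auto
    have "norm (A *v (z s - Pol A x a k s)) \<le> nA * norm (z s - Pol A x a k s)" by (rule nA)
    also have "\<dots> \<le> nA * (Ck nA k * ((s - a)^(k+1) * norm x + J))"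
      using Suc.IH[of s] s t nA(2) by (intro mult_left_mono) (auto simp: x_def)
    also have "\<dots> \<le> nA * (Ck nA k * ((t - a)^(k+1) * norm x + J))"
      using s nA(2) Ck0
      by (intro mult_left_mono add_right_mono mult_right_mono power_mono) auto
    finally show "norm (A *v (z s - Pol A x a k s)) \<le> nA * (Ck nA k * ((t - a)^(k+1) * norm x + J))" .
  qed
  then have i1: "norm (integral {a..t} (\<lambda>s. A *v (z s - Pol A x a k s)))
        \<le> nA * Ck nA k * ((t - a)^(k+1) * norm x + J) * (t - a)" using t by (simp add: mult.assoc)
  have "norm (z t - Pol A x a (Suc k) t) \<le> nA * Ck nA k * ((t - a)^(k+1) * norm x + J) * (t - a) + J"
    unfolding eq using norm_triangle_ineq4 i1 J[OF Suc.prems] by (smt (verit))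
  also have "\<dots> \<le> Ck nA (Suc k) * ((t - a)^(Suc k+1) * norm x + J)"
  proof -
    define q where "q = nA * Ck nA k"
    define e where "e = t - a"
    have q0: "0 \<le> q" using nA(2) Ck0 by (simp add: q_def)
    have e: "0 \<le> e" "e \<le> 1" using t ab by (auto simp: e_def)
    have p0: "0 \<le> e^(k+2) * norm x" using e by simp
    have "q * (e^(k+1) * norm x + J) * e + J = q * e^(k+2) * norm x + q * J * e + J"
      by (simp add: algebra_simps power_Suc2)
    also have "\<dots> \<le> q * e^(k+2) * norm x + q * J + J + e^(k+2) * norm x"
    proof -
      have m: "q * J * e \<le> q * J" using mult_left_le[of e "q * J"] e q0 J0 by simp
      show ?thesis using m p0 by linarith
    qed
    also have "\<dots> = (q + 1) * (e^(k+2) * norm x + J)" by (simp add: algebra_simps)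
    finally show ?thesis by (simp add: q_def e_def)
  qed
  finally show ?case by (simp add: x_def)
qed

end


lemma neg_mv2: "(- C) *v y = - (C *v y)" for C :: "real^'n^'n" and y :: "real^'n"
proof -
  have "\<And>i. (\<Sum>j\<in>UNIV. - C $ i $ j * y $ j) = - (\<Sum>j\<in>UNIV. C $ i $ j * y $ j)"
    by (subst sum_negf[symmetric]) simp
  then show ?thesis by (simp add: matrix_vector_mult_def vec_eq_iff)
qed

lemma mpow_comm: "mpow A j ** A = A ** mpow A j"
proof (induction j)
  case 0 then show ?case by (simp add: mpow_0)
next
  case (Suc j)
  have "mpow A (Suc j) ** A = A ** (mpow A j ** A)" by (simp add: mpow_Suc matrix_mul_assoc)
  also have "\<dots> = A ** mpow A (Suc j)" using Suc by (simp add: mpow_Suc)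
  finally show ?case .
qed

lemma transpose_mpow:
  fixes A :: "real^'n^'n"
  assumes skew: "transpose A = - A"
  shows "transpose (mpow A j) *v x = (-1)^j *\<^sub>R (mpow A j *v x)"
proof (induction j arbitrary: x)
  case 0 then show ?case by (simp add: mpow_0 transpose_mat)
next
  case (Suc j)
  have "transpose (mpow A (Suc j)) *v x = transpose (mpow A j) *v (transpose A *v x)"
    by (simp only: mpow_Suc matrix_transpose_mul matrix_vector_mul_assoc)
  also have "transpose A *v x = - (A *v x)" using skew by (simp add: neg_mv2)
  also have "transpose (mpow A j) *v (- (A *v x)) = (-1)^j *\<^sub>R (mpow A j *v (- (A *v x)))"
    by (rule Suc)
  also have "mpow A j *v (- (A *v x)) = - (mpow A (Suc j) *v x)"
    by (simp add: vec.neg matrix_vector_mul_assoc mpow_comm mpow_Suc)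
  finally show ?case by simp
qed

lemma kalman_inj:
  fixes A :: "real^'n^'n" and B :: "real^'r^'n"
  assumes skew: "transpose A = - A" and ctrl: "controllable A B"
    and zero: "\<And>j. j \<le> kalman_index A B \<Longrightarrow> transpose B *v (mpow A j *v x) = 0"
  shows "x = 0"
proof -
  define K where "K = kalman_index A B"
  have "kalman_rank A B (CARD('n) - 1) = CARD('n)" using ctrl by (simp add: controllable_def)
  then have rk: "kalman_rank A B K = CARD('n)"
    unfolding K_def kalman_index_def by (rule LeastI)
  define S where "S = (\<Union>j\<in>{..K}. columns (mpow A j ** B))"
  have "dim S = DIM(real^'n)" using rk by (simp add: kalman_rank_def S_def)
  then have sp: "span S = UNIV" by (simp only: dim_eq_full)
  have orth: "orthogonal x y" if yS: "y \<in> S" for y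
  proof -
    obtain j i where j: "j \<le> K" and y: "y = column i (mpow A j ** B)"
      using yS unfolding S_def columns_def by blast
    have "y \<bullet> x = (transpose (mpow A j ** B) *v x) $ i"
      by (simp add: y column_def inner_vec_def matrix_vector_mult_def transpose_def mult.commute)
    also have "transpose (mpow A j ** B) *v x = transpose B *v (transpose (mpow A j) *v x)"
      by (simp only: matrix_transpose_mul matrix_vector_mul_assoc)
    also have "\<dots> = (-1)^j *\<^sub>R (transpose B *v (mpow A j *v x))"
      by (simp only: transpose_mpow[OF skew] matrix_vector_mult_scaleR)
    also have "\<dots> = 0" using zero j by (simp add: K_def)
    finally show ?thesis by (simp add: orthogonal_def inner_commute)
  qed
  have "orthogonal x x" using orthogonal_to_span[of x S x] sp orth by auto
  then show ?thesis by (simp add: orthogonal_def)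
qed

definition kh :: "real^'n^'n \<Rightarrow> real^'r^'n \<Rightarrow> nat \<Rightarrow> real^'n \<Rightarrow> real" where
  "kh A B K x = (\<Sum>j\<le>K. (norm (transpose B *v (mpow A j *v x)))^2)"

lemma kh_scale: "kh A B K (c *\<^sub>R x) = c^2 * kh A B K x"
  by (simp add: kh_def matrix_vector_mult_scaleR sum_distrib_left power_mult_distrib)

lemma kalman_lower:
  fixes A :: "real^'n^'n" and B :: "real^'r^'n"
  assumes skew: "transpose A = - A" and ctrl: "controllable A B"
  shows "\<exists>m>0. \<forall>x. m * (norm x)^2 \<le> kh A B (kalman_index A B) x"
proof -
  define K where "K = kalman_index A B"
  have lc: "continuous_on S ((*v) C)" for S and C :: "real^'a^'b"
    by (rule linear_continuous_on[OF matrix_vector_mul_bounded_linear])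
  have cont: "continuous_on (sphere 0 1) (kh A B K)"
  proof -
    have "continuous_on (sphere 0 1) (\<lambda>x. transpose B *v (mpow A j *v x))" for j
      using continuous_on_compose[OF lc[of "sphere 0 1" "mpow A j"] lc[of _ "transpose B"]]
      by (simp add: o_def)
    then show ?thesis unfolding kh_def by (intro continuous_intros) auto
  qed
  have ne: "sphere (0::real^'n) 1 \<noteq> {}" by simp
  obtain x0 where x0: "x0 \<in> sphere 0 1" and min: "\<And>y. y \<in> sphere 0 1 \<Longrightarrow> kh A B K x0 \<le> kh A B K y"
    using continuous_attains_inf[OF compact_sphere ne cont] by blast
  have pos: "0 < kh A B K x0"
  proof (rule ccontr)
    assume "\<not> 0 < kh A B K x0"
    then have "kh A B K x0 \<le> 0" by simp
    moreover have "0 \<le> (norm (transpose B *v (mpow A j *v x0)))^2" for j by simp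
    ultimately have "\<forall>j\<in>{..K}. (norm (transpose B *v (mpow A j *v x0)))^2 = 0"
      unfolding kh_def using sum_nonneg_eq_0_iff[of "{..K}" "\<lambda>j. (norm (transpose B *v (mpow A j *v x0)))^2"]
      by (smt (verit) finite_atMost sum_nonneg zero_le_power2)
    then have "\<And>j. j \<le> kalman_index A B \<Longrightarrow> transpose B *v (mpow A j *v x0) = 0"
      by (auto simp: K_def)
    then have "x0 = 0" by (rule kalman_inj[OF skew ctrl])
    then show False using x0 by simp
  qed
  show ?thesis
  proof (intro exI[of _ "kh A B K x0"] conjI allI pos)
    fix x :: "real^'n"
    show "kh A B K x0 * (norm x)^2 \<le> kh A B (kalman_index A B) x"
    proof (cases "x = 0")
      case True then show ?thesis by (simp add: kh_def)
    next
      case False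
      define y where "y = (1 / norm x) *\<^sub>R x"
      have y: "y \<in> sphere 0 1" using False by (simp add: y_def)
      have xy: "x = norm x *\<^sub>R y" using False by (simp add: y_def)
      have "kh A B K x = (norm x)^2 * kh A B K y" by (subst xy) (simp add: kh_scale)
      moreover have "kh A B K x0 * (norm x)^2 \<le> kh A B K y * (norm x)^2"
        using min[OF y] by (intro mult_right_mono) auto
      ultimately show ?thesis by (simp add: K_def mult.commute)
    qed
  qed
qed

lemma sum_big_term:
  fixes f :: "'a \<Rightarrow> real"
  assumes "finite S" "S \<noteq> {}" "c \<le> sum f S"
  shows "\<exists>i\<in>S. c / real (card S) \<le> f i"
proof (rule ccontr)
  assume "\<not> ?thesis"
  then have "\<And>i. i \<in> S \<Longrightarrow> f i < c / real (card S)" by auto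
  then have "sum f S < sum (\<lambda>_. c / real (card S)) S"
    using assms by (intro sum_strict_mono) auto
  also have "\<dots> = c" using assms by simp
  finally show False using assms by simp
qed



lemma pick_coeff:
  fixes A :: "real^'n^'n" and B :: "real^'r^'n"
  assumes "m * (norm x)^2 \<le> kh A B K x"
  shows "\<exists>j\<le>K. \<exists>k. m / (real (K+1) * real CARD('r)) * (norm x)^2
            \<le> ((transpose B *v (mpow A j *v x)) $ k)^2"
proof -
  define v where "v j = transpose B *v (mpow A j *v x)" for j
  have "kh A B K x = (\<Sum>j\<le>K. \<Sum>k\<in>UNIV. (v j $ k)^2)"
    unfolding kh_def v_def[symmetric]
    by (simp only: power2_norm_eq_inner inner_vec_def) (simp add: power2_eq_square)
  also have "\<dots> = (\<Sum>(j,k)\<in>{..K} \<times> UNIV. (v j $ k)^2)" by (rule sum.cartesian_product)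
  finally have "m * (norm x)^2 \<le> (\<Sum>(j,k)\<in>{..K} \<times> UNIV. (v j $ k)^2)" using assms by simp
  then obtain jk where jk: "jk \<in> {..K} \<times> (UNIV :: 'r set)"
    and le: "m * (norm x)^2 / real (card ({..K} \<times> (UNIV :: 'r set))) \<le> (\<lambda>(j,k). (v j $ k)^2) jk"
    using sum_big_term[of "{..K} \<times> (UNIV :: 'r set)" "m * (norm x)^2" "\<lambda>(j,k). (v j $ k)^2"]
    by auto
  obtain j k where jk': "jk = (j, k)" by fastforce
  have "card ({..K} \<times> (UNIV :: 'r set)) = (K+1) * CARD('r)" by (simp add: card_cartesian_product)
  then show ?thesis using jk le jk' by (intro exI[of _ j] conjI exI[of _ k]) (auto simp: v_def algebra_simps)
qed

definition pK :: "real^'n^'n \<Rightarrow> real^'r^'n \<Rightarrow> real^'n \<Rightarrow> 'r \<Rightarrow> nat \<Rightarrow> real poly" where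
  "pK A B x k K = (\<Sum>j\<le>K. monom ((transpose B *v (mpow A j *v x)) $ k / fact j) j)"

lemma pK_degree: "degree (pK A B x k K) \<le> K"
  unfolding pK_def by (rule degree_sum_le) (auto intro: order.trans[OF degree_monom_le])

lemma pK_coeff: "j \<le> K \<Longrightarrow> coeff (pK A B x k K) j = (transpose B *v (mpow A j *v x)) $ k / fact j"
  unfolding pK_def by (simp add: coeff_sum coeff_monom)

lemma pK_poly: "poly (pK A B x k K) (s - a) = (transpose B *v Pol A x a K s) $ k"
  unfolding pK_def Pol_def
  by (simp add: poly_sum poly_monom vec.sum matrix_vector_mult_scaleR mult.commute)



context sys begin

definition "nB = onorm ((*v) B)"
definition "nBt = onorm ((*v) (transpose B))"

lemma nB: "norm (B *v y) \<le> nB * norm y" "0 \<le> nB"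
  using onorm[OF matrix_vector_mul_bounded_linear] onorm_pos_le[OF matrix_vector_mul_bounded_linear]
  by (auto simp: nB_def)

lemma nBt1: "norm (transpose B *v y) \<le> nBt * norm y"
  unfolding nBt_def by (rule onorm[OF matrix_vector_mul_bounded_linear])
lemma nBt2: "0 \<le> nBt"
  unfolding nBt_def by (rule onorm_pos_le[OF matrix_vector_mul_bounded_linear])

lemma al_int: "al integrable_on {u..v}"
proof -
  have "set_integrable lborel {u..v} (\<lambda>s. al s * 1)"
    by (rule set_int_cont_mult[OF al_meas al_abs]) auto
  then show ?thesis using set_borel_integral_eq_integral(1) by simp
qed

lemma al_int_le: "u \<le> v \<Longrightarrow> integral {u..v} al \<le> v - u"
proof -
  assume uv: "u \<le> v"
  have "integral {u..v} al \<le> integral {u..v} (\<lambda>s. 1::real)"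
    using al_int al_range by (intro integral_le) auto
  then show ?thesis using uv by simp
qed

lemma Jbound:
  assumes a: "0 \<le> a" "a \<le> t" "t \<le> b" and \<epsilon>: "0 < \<epsilon>"
  shows "norm (integral {a..t} g) \<le> nB * (\<epsilon> * (b - a) + integral {a..b} dis / \<epsilon>) / 2"
proof -
  define G where "G s = (nB * \<epsilon> / 2) *\<^sub>R al s + (nB / (2 * \<epsilon>)) *\<^sub>R dis s" for s
  have Gint: "G integrable_on {u..v}" if "0 \<le> u" for u v
    unfolding G_def using al_int dis_int[OF that]
    by (intro integrable_cmul integrable_add) auto
  have G0: "0 \<le> G s" for s using al_range[of s] dis_nonneg[of s] nB \<epsilon> by (simp add: G_def)
  have gint: "g integrable_on {a..t}" using g_int[OF a(1,2)] by blast
  have "norm (integral {a..t} g) \<le> integral {a..t} G"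
  proof (rule integral_norm_bound_integral[OF gint Gint[OF a(1)]])
    fix s assume s: "s \<in> {a..t}"
    then have s0: "0 \<le> s" using a by auto
    have gs: "g s = al s *\<^sub>R (B *v w s)"
      by (simp only: g_def al_eq[OF s0] M_def w_def matrix_vector_mul_assoc)
    have al0: "0 \<le> al s" using al_range[of s] by simp
    have amgm: "al s * norm (w s) \<le> (\<epsilon> * al s + dis s / \<epsilon>) / 2"
    proof -
      have "0 \<le> al s * (\<epsilon> - norm (w s))^2 / \<epsilon>" using al0 \<epsilon> by simp
      moreover have "al s * (\<epsilon> - norm (w s))^2 / \<epsilon> = \<epsilon> * al s + dis s / \<epsilon> - 2 * (al s * norm (w s))"
        using \<epsilon> by (simp add: dis_def power2_eq_square field_simps)
      ultimately show ?thesis by simp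
    qed
    have "norm (g s) = al s * norm (B *v w s)" using gs al0 by simp
    also have "\<dots> \<le> al s * (nB * norm (w s))" using nB(1) al0 by (intro mult_left_mono) auto
    also have "\<dots> = nB * (al s * norm (w s))" by simp
    also have "\<dots> \<le> nB * ((\<epsilon> * al s + dis s / \<epsilon>) / 2)" using amgm nB(2) by (intro mult_left_mono) auto
    finally show "norm (g s) \<le> G s" using \<epsilon> by (simp add: G_def field_simps)
  qed
  also have "\<dots> \<le> integral {a..b} G"
    using a Gint[OF a(1)] G0 by (intro integral_subset_le) auto
  also have "\<dots> = (nB * \<epsilon> / 2) * integral {a..b} al + (nB / (2 * \<epsilon>)) * integral {a..b} dis"
  proof -
    have i1: "(\<lambda>s. (nB * \<epsilon> / 2) *\<^sub>R al s) integrable_on {a..b}" by (rule integrable_cmul[OF al_int])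
    have i2: "(\<lambda>s. (nB / (2 * \<epsilon>)) *\<^sub>R dis s) integrable_on {a..b}"
      by (rule integrable_cmul[OF dis_int[OF a(1)]])
    show ?thesis unfolding G_def by (simp only: integral_add[OF i1 i2] integral_cmul) simp
  qed
  also have "\<dots> = nB * (\<epsilon> * integral {a..b} al + integral {a..b} dis / \<epsilon>) / 2"
    using \<epsilon> by (simp add: field_simps)
  also have "\<dots> \<le> nB * (\<epsilon> * (b - a) + integral {a..b} dis / \<epsilon>) / 2"
    using al_int_le[of a b] a \<epsilon> nB(2) by (intro divide_right_mono mult_left_mono add_right_mono) auto
  finally show ?thesis .
qed

end


lemma sq_sum_le: "(u + v)^2 \<le> 2 * u^2 + 2 * (v::real)^2"
proof -
  have "(u + v)^2 = 2 * u^2 + 2 * v^2 - (u - v)^2" by (simp add: power2_eq_square algebra_simps)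
  moreover have "0 \<le> (u - v)^2" by simp
  ultimately show ?thesis by linarith
qed

lemma final_contra:
  assumes "c * p \<le> 2 * d + 2 * (q * p)" "d < c / 4 * p" "q \<le> c / 4" "0 < (p::real)"
  shows False
proof -
  have "q * p \<le> c / 4 * p" using assms(3,4) by (intro mult_right_mono) auto
  then show False using assms(1,2) by linarith
qed

lemma pow_aux: "(L^(K+1))^2 * L = L^2 * (L::real)^(2*K+1)"
proof -
  have "(L^(K+1))^2 * L = L^((K+1)*2) * L" by (simp only: power_mult)
  also have "\<dots> = L^((K+1)*2 + 1)" by (simp only: power_add power_one_right)
  also have "(K+1)*2 + 1 = 2 + (2*K+1)" by simp
  also have "L^(2 + (2*K+1)) = L^2 * L^(2*K+1)" by (rule power_add)
  finally show ?thesis .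
qed

lemma aux_half: "p \<le> X \<Longrightarrow> q = X \<Longrightarrow> (q + p) / 2 \<le> (X::real)" by simp

context sys begin

lemma key:
  assumes ctrl: "controllable A B" and \<rho>: "0 < \<rho>"
  shows "\<exists>c>0. \<exists>L0>0. L0 \<le> 1 \<and> (\<forall>a L. 0 \<le> a \<longrightarrow> 0 < L \<longrightarrow> L \<le> L0 \<longrightarrow>
            \<rho> * L \<le> (LINT s:{a..a+L}|lborel. al s) \<longrightarrow>
            c * L^(2 * kalman_index A B + 1) * V a \<le> V a - V (a + L))"
proof -
  define K where "K = kalman_index A B"
  obtain m where m: "m > 0" "\<And>x. m * (norm x)^2 \<le> kh A B K x"
    using kalman_lower[OF skew ctrl] unfolding K_def by auto
  define \<kappa> where "\<kappa> = m / (real (K+1) * real CARD('r))"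
  have \<kappa>: "0 < \<kappa>" using m by (simp add: \<kappa>_def)
  define c1 where "c1 = cpoly K \<rho> * \<kappa> / (fact K)^2"
  have c1: "0 < c1" using cpoly_pos[OF \<rho>] \<kappa> by (simp add: c1_def)
  define C2 where "C2 = nBt * Ck nA K * (1 + nB)"
  define c where "c = min 1 (c1/4)"
  define L0 where "L0 = min 1 (c1 / (4 * C2^2 + 1))"
  have c: "0 < c" "c \<le> 1" "c \<le> c1/4" using c1 by (auto simp: c_def)
  have L0: "0 < L0" "L0 \<le> 1" "L0 \<le> c1 / (4 * C2^2 + 1)"
  proof -
    have "0 < 4 * C2^2 + 1" by (simp add: add_nonneg_pos)
    then have "0 < c1 / (4 * C2^2 + 1)" using c1 by simp
    then show "0 < L0" "L0 \<le> 1" "L0 \<le> c1 / (4 * C2^2 + 1)" by (auto simp: L0_def)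
  qed
  have CkK: "0 \<le> Ck nA K" using Ck_nonneg nA(2) by simp
  have "\<forall>a L. 0 \<le> a \<longrightarrow> 0 < L \<longrightarrow> L \<le> L0 \<longrightarrow>
            \<rho> * L \<le> (LINT s:{a..a+L}|lborel. al s) \<longrightarrow>
            c * L^(2 * kalman_index A B + 1) * V a \<le> V a - V (a + L)"
  proof (intro allI impI)
    fix a L assume a: "0 \<le> a" and L: "0 < L" "L \<le> L0"
      and mass: "\<rho> * L \<le> (LINT s:{a..a+L}|lborel. al s)"
    define b where "b = a + L"
    define x where "x = z a"
    define D where "D = integral {a..b} dis"
    have L1: "L \<le> 1" using L L0 by simp
    have ab: "a \<le> b" using L by (simp add: b_def)
    have VD: "V a - V b = 2 * D" using energy[OF a ab] by (simp add: D_def)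
    have D0: "0 \<le> D" unfolding D_def using dis_int[OF a, of b] dis_nonneg
      by (intro integral_nonneg) auto
    have main: "c * L^(2*K+1) * (norm x)^2 \<le> D"
    proof (rule ccontr)
      assume "\<not> ?thesis"
      then have Dlt: "D < c * L^(2*K+1) * (norm x)^2" by simp
      have nx: "0 < norm x"
      proof (rule ccontr)
        assume "\<not> 0 < norm x"
        then have "norm x = 0" by simp
        then show False using Dlt D0 by simp
      qed
      define \<epsilon> where "\<epsilon> = L^K * norm x"
      have \<epsilon>: "0 < \<epsilon>" using L nx by (simp add: \<epsilon>_def)
      define J where "J = nB * L^(K+1) * norm x"
      have J: "norm (integral {a..t} g) \<le> J" if t: "t \<in> {a..b}" for t
      proof -
        have "norm (integral {a..t} g) \<le> nB * (\<epsilon> * (b - a) + D / \<epsilon>) / 2"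
          using Jbound[OF a _ _ \<epsilon>, of t b] t by (auto simp: D_def)
        also have "\<dots> \<le> nB * (L^(K+1) * norm x)"
        proof -
          have e1: "\<epsilon> * (b - a) = L^(K+1) * norm x" by (simp add: \<epsilon>_def b_def power_Suc2)
          have "D / \<epsilon> \<le> c * L^(2*K+1) * (norm x)^2 / \<epsilon>"
            using Dlt \<epsilon> by (intro divide_right_mono) auto
          also have "\<dots> = c * (L^(K+1) * norm x)"
          proof -
            have pw: "L^(K*2) = L^K * L^K" by (simp add: power_mult power2_eq_square)
            show ?thesis using L nx by (simp add: \<epsilon>_def power2_eq_square power_add field_simps pw)
          qed
          also have "\<dots> \<le> 1 * (L^(K+1) * norm x)" using c L nx by (intro mult_right_mono) auto
          finally have "D / \<epsilon> \<le> L^(K+1) * norm x" by simp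
          then have "(\<epsilon> * (b - a) + D / \<epsilon>) / 2 \<le> L^(K+1) * norm x" using e1 by (rule aux_half)
          then have "nB * ((\<epsilon> * (b - a) + D / \<epsilon>) / 2) \<le> nB * (L^(K+1) * norm x)"
            by (rule mult_left_mono[OF _ nB(2)])
          then show ?thesis by (simp only: times_divide_eq_right)
        qed
        finally show ?thesis by (simp add: J_def mult.assoc)
      qed
      define E where "E = Ck nA K * (1 + nB) * L^(K+1) * norm x"
      have app: "norm (z t - Pol A x a K t) \<le> E" if t: "t \<in> {a..b}" for t
      proof -
        have "norm (z t - Pol A x a K t) \<le> Ck nA K * ((t - a)^(K+1) * norm x + J)"
          using approx[OF a _ J t, of K] L1 by (simp add: b_def x_def)
        also have "\<dots> \<le> Ck nA K * (L^(K+1) * norm x + J)"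
          using t CkK by (intro mult_left_mono add_right_mono mult_right_mono power_mono) (auto simp: b_def)
        also have "\<dots> = E" by (simp add: E_def J_def algebra_simps)
        finally show ?thesis .
      qed
      obtain j0 k0 where j0: "j0 \<le> K"
        and big: "\<kappa> * (norm x)^2 \<le> ((transpose B *v (mpow A j0 *v x)) $ k0)^2"
        using pick_coeff[OF m(2)] unfolding \<kappa>_def by blast
      define p where "p = pK A B x k0 K"
      define \<gamma> where "\<gamma> = sqrt \<kappa> * norm x / fact K"
      have \<gamma>0: "0 \<le> \<gamma>" using \<kappa> by (simp add: \<gamma>_def)
      have \<gamma>le: "\<gamma> \<le> \<bar>coeff p j0\<bar>"
      proof -
        define v where "v = (transpose B *v (mpow A j0 *v x)) $ k0"
        have "sqrt \<kappa> * norm x = sqrt (\<kappa> * (norm x)^2)" using \<kappa> by (simp add: real_sqrt_mult)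
        also have "\<dots> \<le> sqrt (v^2)" using big unfolding v_def by (rule real_sqrt_le_mono)
        also have "\<dots> = \<bar>v\<bar>" by simp
        finally have sv: "sqrt \<kappa> * norm x \<le> \<bar>v\<bar>" .
        have "\<gamma> \<le> \<bar>v\<bar> / fact K" unfolding \<gamma>_def using sv by (intro divide_right_mono) auto
        also have "\<dots> \<le> \<bar>v\<bar> / fact j0"
          using j0 by (intro divide_left_mono fact_mono) auto
        also have "\<dots> = \<bar>coeff p j0\<bar>" using j0 by (simp add: p_def pK_coeff v_def)
        finally show ?thesis .
      qed
      have low: "cpoly K \<rho> * \<gamma>^2 * L^(2*K+1) \<le> (LINT s:{a..a+L}|lborel. al s * (poly p (s - a))^2)"
        by (rule poly_obs[OF al_meas al_range \<rho> L(1) L1 mass pK_degree[of A B x k0 K, folded p_def] \<gamma>0 \<gamma>le])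
      have \<gamma>2: "cpoly K \<rho> * \<gamma>^2 = c1 * (norm x)^2"
        using \<kappa> by (simp add: \<gamma>_def c1_def power_mult_distrib power_divide)
      define E' where "E' = nBt * E"
      have ptw: "al s * (poly p (s - a))^2 \<le> 2 * dis s + 2 * E'^2" if s: "s \<in> {a..b}" for s
      proof -
        define q where "q = transpose B *v Pol A x a K s"
        have pq: "poly p (s - a) = q $ k0" by (simp only: p_def q_def pK_poly)
        have "w s - q = transpose B *v (z s - Pol A x a K s)"
          by (simp only: w_def q_def matrix_vector_mult_diff_distrib)
        then have "norm (w s - q) \<le> nBt * norm (z s - Pol A x a K s)" using nBt1 by simp
        also have "\<dots> \<le> nBt * E" using app[OF s] nBt2 by (intro mult_left_mono) auto
        finally have wq: "norm (w s - q) \<le> E'" by (simp add: E'_def)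
        have "\<bar>q $ k0\<bar> \<le> norm q" by (rule component_le_norm_cart)
        also have "\<dots> \<le> norm (w s) + norm (w s - q)" by (metis norm_triangle_sub add.commute norm_minus_commute)
        also have "\<dots> \<le> norm (w s) + E'" using wq by simp
        finally have qa: "\<bar>q $ k0\<bar> \<le> norm (w s) + E'" .
        have "(q $ k0)^2 \<le> (norm (w s) + E')^2"
          using qa by (metis abs_ge_zero power2_abs power_mono)
        also have "\<dots> \<le> 2 * (norm (w s))^2 + 2 * E'^2" by (rule sq_sum_le)
        finally have q2: "(poly p (s - a))^2 \<le> 2 * (norm (w s))^2 + 2 * E'^2" by (simp add: pq)
        have al: "0 \<le> al s" "al s \<le> 1" using al_range[of s] by auto
        have "al s * (poly p (s - a))^2 \<le> al s * (2 * (norm (w s))^2 + 2 * E'^2)"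
          using q2 al by (intro mult_left_mono) auto
        also have "\<dots> = 2 * dis s + al s * (2 * E'^2)" by (simp add: dis_def algebra_simps)
        also have "\<dots> \<le> 2 * dis s + 1 * (2 * E'^2)" using al by (intro add_left_mono mult_right_mono) auto
        finally show ?thesis by simp
      qed
      have pc: "continuous_on {a..b} (\<lambda>s. (poly p (s - a))^2)" by (intro continuous_intros)
      have i1: "set_integrable lborel {a..b} (\<lambda>s. al s * (poly p (s - a))^2)"
        by (rule set_int_cont_mult[OF al_meas al_abs pc])
      have i2: "set_integrable lborel {a..b} dis" by (rule dis_set_int[OF a])
      have i3: "set_integrable lborel {a..b} (\<lambda>s. 2 * dis s + 2 * E'^2)"
      proof -
        have "set_integrable lborel {a..b} (\<lambda>s. 2 * E'^2)"
          by (rule set_int_bdd[where C="\<bar>2 * E'^2\<bar>"]) auto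
        then show ?thesis using i2 by (intro set_integral_add set_integral_mult_right) auto
      qed
      have "(LINT s:{a..b}|lborel. al s * (poly p (s - a))^2) \<le> (LINT s:{a..b}|lborel. 2 * dis s + 2 * E'^2)"
        using i1 i3 ptw by (intro set_integral_mono) auto
      also have "\<dots> = 2 * D + 2 * E'^2 * L"
      proof -
        have "(LINT s:{a..b}|lborel. 2 * dis s + 2 * E'^2)
            = 2 * (LINT s:{a..b}|lborel. dis s) + (LINT s:{a..b}|lborel. 2 * E'^2)"
          using i2 by (subst set_integral_add) (auto intro: set_int_bdd[where C="\<bar>2 * E'^2\<bar>"] set_integral_mult_right)
        also have "(LINT s:{a..b}|lborel. dis s) = D"
          unfolding D_def by (rule set_borel_integral_eq_integral(2)[OF i2])
        also have "(LINT s:{a..b}|lborel. 2 * E'^2) = 2 * E'^2 * L"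
          using ab by (simp add: set_integral_const b_def)
        finally show ?thesis .
      qed
      finally have up: "(LINT s:{a..b}|lborel. al s * (poly p (s - a))^2) \<le> 2 * D + 2 * E'^2 * L" .
      define P where "P = L^(2*K+1) * (norm x)^2"
      have P0: "0 < P" using L nx by (simp add: P_def)
      have E'e: "E' = C2 * L^(K+1) * norm x" by (simp add: E'_def E_def C2_def mult_ac)
      have E'L: "E'^2 * L = C2^2 * L^2 * P"
      proof -
        have "E'^2 * L = C2^2 * ((L^(K+1))^2 * L) * (norm x)^2"
          by (simp add: E'e power_mult_distrib mult_ac)
        also have "\<dots> = C2^2 * (L^2 * L^(2*K+1)) * (norm x)^2" by (simp only: pow_aux)
        also have "\<dots> = C2^2 * L^2 * P" by (simp add: P_def mult_ac)
        finally show ?thesis .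
      qed
      have ineq1: "c1 * P \<le> 2 * D + 2 * (C2^2 * L^2 * P)"
      proof -
        have "c1 * P = cpoly K \<rho> * \<gamma>^2 * L^(2*K+1)" by (simp add: P_def \<gamma>2 mult_ac)
        also have "\<dots> \<le> (LINT s:{a..b}|lborel. al s * (poly p (s - a))^2)" using low by (simp add: b_def)
        also have "\<dots> \<le> 2 * D + 2 * E'^2 * L" by (rule up)
        also have "\<dots> = 2 * D + 2 * (C2^2 * L^2 * P)" using E'L by (simp only: mult.assoc)
        finally show ?thesis .
      qed
      have ineq2: "D < c1/4 * P"
      proof -
        have "D < c * P" using Dlt by (simp add: P_def mult_ac)
        also have "\<dots> \<le> c1/4 * P" using c(3) P0 by (intro mult_right_mono) auto
        finally show ?thesis .
      qed
      have ineq3: "C2^2 * L^2 \<le> c1/4"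
      proof -
        have "L^2 \<le> L" using L L1 by (simp add: power2_eq_square mult_left_le)
        also have "\<dots> \<le> c1 / (4 * C2^2 + 1)" using L L0 by simp
        finally have "C2^2 * L^2 \<le> C2^2 * (c1 / (4 * C2^2 + 1))" by (intro mult_left_mono) auto
        also have "\<dots> \<le> c1 / 4"
        proof -
          have d: "0 < 4 * C2^2 + 1" by (simp add: add_nonneg_pos)
          have "C2^2 * c1 * 4 \<le> c1 * (4 * C2^2 + 1)" using c1 by (simp add: algebra_simps)
          then show ?thesis using d by (simp add: field_simps)
        qed
        finally show ?thesis .
      qed
      show False by (rule final_contra[OF ineq1 ineq2 ineq3 P0])
    qed
    have "c * L^(2*K+1) * V a \<le> V a - V (a + L)"
    proof -
      have "V a = (norm x)^2" by (simp add: V_def x_def)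
      then have "c * L^(2*K+1) * V a \<le> D" using main by simp
      also have "\<dots> \<le> 2 * D" using D0 by simp
      also have "\<dots> = V a - V (a + L)" using VD by (simp add: b_def)
      finally show ?thesis .
    qed
    then show "c * L^(2 * kalman_index A B + 1) * V a \<le> V a - V (a + L)" by (simp add: K_def)
  qed
  then show ?thesis using c(1) L0(1,2) by blast
qed

end


context sys begin

lemma al_set_int: "set_integrable lborel {u..v} al"
proof -
  have "set_integrable lborel {u..v} (\<lambda>s. al s * 1)"
    by (rule set_int_cont_mult[OF al_meas al_abs]) auto
  then show ?thesis by simp
qed

lemma al_lint: "(LINT s:{u..v}|lborel. al s) = integral {u..v} al"
  by (rule set_borel_integral_eq_integral(2)[OF al_set_int])

lemma mass_sum: "integral {a..a + real k * h} al = (\<Sum>i<k. integral {a + real i * h..a + real (Suc i) * h} al)"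
  if "0 \<le> h" for a h k
proof (induction k)
  case 0 then show ?case by simp
next
  case (Suc k)
  have "integral {a..a + real k * h} al + integral {a + real k * h..a + real (Suc k) * h} al
        = integral {a..a + real (Suc k) * h} al"
    using that al_int by (intro Henstock_Kurzweil_Integration.integral_combine) (auto simp: distrib_right)
  then show ?case using Suc by simp
qed

lemma drop_bound:
  assumes c: "0 < c" and L0: "0 < L0" "L0 \<le> 1"
    and key: "\<forall>a L. 0 \<le> a \<longrightarrow> 0 < L \<longrightarrow> L \<le> L0 \<longrightarrow>
            \<rho> * L \<le> (LINT s:{a..a+L}|lborel. al s) \<longrightarrow> c * L^(2*kk+1) * V a \<le> V a - V (a + L)"
    and vinf: "\<And>t. 0 \<le> t \<Longrightarrow> v \<le> V t" and v0: "0 \<le> v"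
    and ab: "0 \<le> a" "a \<le> b" and mass: "\<rho> * (b - a) \<le> integral {a..b} al"
  shows "c * (min (b - a) (L0/2))^(2*kk+1) * v \<le> V a - V b"
proof -
  define ell where "ell = b - a"
  have drop0: "0 \<le> V a - V b" using V_mono[OF ab] by simp
  consider "ell = 0" | "0 < ell" "ell \<le> L0" | "L0 < ell" using ab by (force simp: ell_def)
  then show ?thesis
  proof cases
    case 1 then show ?thesis using drop0 L0 by (simp add: ell_def min_def)
  next
    case 2
    have m: "\<rho> * ell \<le> (LINT s:{a..a+ell}|lborel. al s)" using mass by (simp add: al_lint ell_def)
    have k: "c * ell^(2*kk+1) * V a \<le> V a - V (a + ell)" using key ab 2 m by blast
    have "c * (min ell (L0/2))^(2*kk+1) * v \<le> c * ell^(2*kk+1) * V a"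
      using c v0 vinf[OF ab(1)] 2
      by (intro mult_mono power_mono mult_left_mono) auto
    then show ?thesis using k by (simp add: ell_def)
  next
    case 3
    define m where "m = nat \<lceil>ell / L0\<rceil>"
    have rl: "1 < ell / L0" using 3 L0 by simp
    have m1: "real m \<ge> ell / L0" using rl by (simp add: m_def)
    have m2: "real m < ell / L0 + 1" using rl ceiling_correct[of "ell / L0"] by (simp add: m_def)
    have mpos: "0 < m" using m1 rl by simp
    define h where "h = ell / real m"
    have hpos: "0 < h" using 3 L0 mpos by (simp add: h_def)
    have hL0: "h \<le> L0" using m1 L0 mpos by (simp add: h_def field_simps)
    have hL2: "L0 / 2 \<le> h"
    proof -
      have "real m < 2 * (ell / L0)" using m2 rl by simp
      then show ?thesis using L0 mpos 3 by (simp add: h_def field_simps)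
    qed
    have bm: "a + real m * h = b" using mpos by (simp add: h_def ell_def)
    have "\<exists>i<m. \<rho> * h \<le> integral {a + real i * h..a + real (Suc i) * h} al"
    proof (rule ccontr)
      assume "\<not> ?thesis"
      then have lt: "\<And>i. i < m \<Longrightarrow> integral {a + real i * h..a + real (Suc i) * h} al < \<rho> * h" by auto
      have "integral {a..b} al = (\<Sum>i<m. integral {a + real i * h..a + real (Suc i) * h} al)"
        using mass_sum[of h a m] hpos bm by simp
      also have "\<dots> < (\<Sum>i<m. \<rho> * h)" using lt mpos by (intro sum_strict_mono) auto
      also have "\<dots> = \<rho> * ell" using mpos by (simp add: h_def)
      finally show False using mass by (simp add: ell_def)
    qed
    then obtain i where i: "i < m" and mi: "\<rho> * h \<le> integral {a + real i * h..a + real (Suc i) * h} al"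
      by blast
    define a' where "a' = a + real i * h"
    have a'0: "0 \<le> a'" using ab hpos by (simp add: a'_def)
    have a'h: "a' + h = a + real (Suc i) * h" by (simp add: a'_def distrib_right)
    have m': "\<rho> * h \<le> (LINT s:{a'..a'+h}|lborel. al s)" using mi unfolding al_lint a'h by (simp add: a'_def)
    have k: "c * h^(2*kk+1) * V a' \<le> V a' - V (a' + h)" using key a'0 hpos hL0 m' by blast
    have le1: "a \<le> a'" using hpos by (simp add: a'_def)
    have le2: "a' + h \<le> b"
    proof -
      have "real (Suc i) * h \<le> real m * h" using i hpos by (intro mult_right_mono) auto
      then show ?thesis using bm a'h by simp
    qed
    have "V a - V b \<ge> V a' - V (a' + h)"
      using V_mono[OF ab(1) le1] V_mono[of "a' + h" b] le2 a'0 hpos by simp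
    moreover have "c * (min ell (L0/2))^(2*kk+1) * v \<le> c * h^(2*kk+1) * V a'"
      using c v0 vinf[OF a'0] 3 hL2 L0 by (intro mult_mono power_mono mult_left_mono) auto
    ultimately show ?thesis using k by (simp add: ell_def)
  qed
qed

end


lemma disjoint_sum:
  fixes a b :: "nat \<Rightarrow> real" and F :: "real \<Rightarrow> real"
  assumes mono: "\<And>s t. 0 \<le> s \<Longrightarrow> s \<le> t \<Longrightarrow> F t \<le> F s"
    and fin: "finite S"
    and ivs: "\<And>n. n \<in> S \<Longrightarrow> 0 \<le> a n \<and> a n < b n"
    and disj: "\<And>m n. m \<in> S \<Longrightarrow> n \<in> S \<Longrightarrow> m \<noteq> n \<Longrightarrow> b m \<le> a n \<or> b n \<le> a m"
    and cd: "0 \<le> c" "c \<le> d" "\<And>n. n \<in> S \<Longrightarrow> c \<le> a n \<and> b n \<le> d"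
  shows "(\<Sum>n\<in>S. F (a n) - F (b n)) \<le> F c - F d"
  using fin ivs disj cd
proof (induction "card S" arbitrary: S d rule: less_induct)
  case less
  show ?case
  proof (cases "S = {}")
    case True then show ?thesis using mono less.prems by simp
  next
    case False
    obtain n0 where n0: "n0 \<in> S" and mx: "\<And>m. m \<in> S \<Longrightarrow> b m \<le> b n0"
      using Max_in[of "b ` S"] Max_ge[of "b ` S"] less.prems(1) False
      by (metis (no_types, lifting) finite_imageI image_iff image_is_empty)
    define S' where "S' = S - {n0}"
    have left: "b m \<le> a n0" if "m \<in> S'" for m
    proof -
      have m: "m \<in> S" "m \<noteq> n0" using that by (auto simp: S'_def)
      have "b m \<le> a n0 \<or> b n0 \<le> a m" using less.prems(3)[OF m(1) n0 m(2)] .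
      moreover have "\<not> b n0 \<le> a m" using mx[OF m(1)] less.prems(2)[OF m(1)] by linarith
      ultimately show ?thesis by blast
    qed
    have a0: "c \<le> a n0" "b n0 \<le> d" "a n0 < b n0" "0 \<le> a n0" using less.prems n0 by auto
    have IH: "(\<Sum>n\<in>S'. F (a n) - F (b n)) \<le> F c - F (a n0)"
    proof (rule less.hyps)
      show "card S' < card S" using n0 less.prems(1) unfolding S'_def by (rule card_Diff1_less[rotated])
      show "finite S'" using less.prems(1) by (simp add: S'_def)
      show "\<And>n. n \<in> S' \<Longrightarrow> 0 \<le> a n \<and> a n < b n" using less.prems(2) by (auto simp: S'_def)
      show "\<And>m n. m \<in> S' \<Longrightarrow> n \<in> S' \<Longrightarrow> m \<noteq> n \<Longrightarrow> b m \<le> a n \<or> b n \<le> a m"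
        using less.prems(3) by (auto simp: S'_def)
      show "0 \<le> c" using less.prems(4) .
      show "c \<le> a n0" using a0 by simp
      show "\<And>n. n \<in> S' \<Longrightarrow> c \<le> a n \<and> b n \<le> a n0" using less.prems(6) left by (auto simp: S'_def)
    qed
    have "(\<Sum>n\<in>S. F (a n) - F (b n)) = (F (a n0) - F (b n0)) + (\<Sum>n\<in>S'. F (a n) - F (b n))"
      using sum.remove[OF less.prems(1) n0] unfolding S'_def by simp
    also have "\<dots> \<le> (F (a n0) - F d) + (F c - F (a n0))"
      using IH mono[of "b n0" d] a0 by simp
    finally show ?thesis by simp
  qed
qed



lemma disj_open:
  fixes am bm an bn :: real
  assumes "am < bm" "an < bn" "{am<..<bm} \<inter> {an<..<bn} = {}"
  shows "bm \<le> an \<or> bn \<le> am"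
proof (rule ccontr)
  assume "\<not> ?thesis"
  then have h: "an < bm" "am < bn" by auto
  define p where "p = (max am an + min bm bn) / 2"
  have "max am an < min bm bn" using assms h by auto
  then have "p \<in> {am<..<bm} \<inter> {an<..<bn}" by (auto simp: p_def)
  then show False using assms by auto
qed

theorem corollary5p1:
  fixes A :: "real^'n^'n" and B :: "real^'r^'n" and \<rho> :: real
    and \<alpha> :: "real \<Rightarrow> real" and a b :: "nat \<Rightarrow> real" and z :: "real \<Rightarrow> real^'n"
  assumes skew: "transpose A = - A"
    and ctrl: "controllable A B"
    and rho_pos: "\<rho> > 0"
    and alpha_meas: "\<alpha> \<in> borel_measurable (restrict_space lborel {0..})"
    and alpha_range: "\<And>t. t \<ge> 0 \<Longrightarrow> 0 \<le> \<alpha> t \<and> \<alpha> t \<le> 1"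
    and intervals: "\<And>n. 0 \<le> a n \<and> a n \<le> b n"
    and disjoint: "\<And>m n. m \<noteq> n \<Longrightarrow> {a m<..<b m} \<inter> {a n<..<b n} = {}"
    and mass: "\<And>n. (LBINT t=a n..b n. \<alpha> t) \<ge> \<rho> * (b n - a n)"
    and diverge: "\<not> summable (\<lambda>n. (b n - a n) ^ (2 * kalman_index A B + 1))"
    and sol: "is_solution A B \<alpha> z"
  shows "((\<lambda>t. norm (z t)) \<longlongrightarrow> 0) at_top"
proof -
  interpret sys A B \<alpha> z by (rule sys.intro[OF skew alpha_meas alpha_range sol])
  define kk where "kk = kalman_index A B"
  obtain c L0 where c: "0 < c" and L0: "0 < L0" "L0 \<le> 1"
    and key: "\<forall>a L. 0 \<le> a \<longrightarrow> 0 < L \<longrightarrow> L \<le> L0 \<longrightarrow>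
            \<rho> * L \<le> (LINT s:{a..a+L}|lborel. al s) \<longrightarrow> c * L^(2*kk+1) * V a \<le> V a - V (a + L)"
    using key[OF ctrl rho_pos] unfolding kk_def by blast
  define v where "v = Inf (V ` {0..})"
  have V0: "0 \<le> V t" for t by (simp add: V_def)
  have bdd: "bdd_below (V ` {0..})" unfolding bdd_below_def using V0 by blast
  have vinf: "v \<le> V t" if "0 \<le> t" for t unfolding v_def using that bdd by (intro cInf_lower) auto
  have v0: "0 \<le> v" unfolding v_def using V0 by (intro cInf_greatest) auto
  have lim: "(V \<longlongrightarrow> v) at_top"
  proof (rule tendstoI)
    fix e :: real assume e: "0 < e"
    have "Inf (V ` {0..}) < v + e" using e by (simp add: v_def)
    then obtain T where T: "T \<ge> 0" "V T < v + e"
      using cInf_less_iff[of "V ` {0..}" "v + e"] bdd by auto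
    show "\<forall>\<^sub>F t in at_top. dist (V t) v < e"
      unfolding eventually_at_top_linorder
    proof (intro exI[of _ T] allI impI)
      fix t assume t: "T \<le> t"
      have "V t \<le> V T" using V_mono[OF T(1) t] .
      moreover have "v \<le> V t" using vinf T t by simp
      ultimately show "dist (V t) v < e" using T by (simp add: dist_real_def)
    qed
  qed
  have mass': "\<rho> * (b n - a n) \<le> integral {a n..b n} al" for n
  proof -
    have ab: "0 \<le> a n" "a n \<le> b n" using intervals[of n] by auto
    have si: "set_integrable lborel {a n..b n} \<alpha>"
    proof -
      have "set_integrable lborel {a n..b n} al" by (rule al_set_int)
      then show ?thesis unfolding set_integrable_def
        by (rule Bochner_Integration.integrable_cong[THEN iffD1, rotated -1])
          (use ab in \<open>auto simp: indicator_def al_eq\<close>)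
    qed
    have "(LBINT t=a n..b n. \<alpha> t) = integral {a n..b n} \<alpha>"
      by (rule interval_integral_eq_integral[OF ab(2) si])
    also have "\<dots> = integral {a n..b n} al"
      using ab by (intro integral_cong) (auto simp: al_eq)
    finally show ?thesis using mass[of n] by simp
  qed
  have v_zero: "v = 0"
  proof (rule ccontr)
    assume "v \<noteq> 0"
    then have vpos: "0 < v" using v0 by simp
    define \<theta> where "\<theta> n = (min (b n - a n) (L0/2))^(2*kk+1)" for n
    have \<theta>0: "0 \<le> \<theta> n" for n using intervals[of n] L0 by (simp add: \<theta>_def)
    have drop: "c * \<theta> n * v \<le> V (a n) - V (b n)" for n
      unfolding \<theta>_def
      by (rule drop_bound[OF c L0 key vinf v0 _ _ mass']) (use intervals in auto)
    have part: "(\<Sum>n<N. c * \<theta> n * v) \<le> V 0" for N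
    proof -
      define S where "S = {n\<in>{..<N}. a n < b n}"
      have "(\<Sum>n<N. c * \<theta> n * v) \<le> (\<Sum>n<N. V (a n) - V (b n))"
        by (intro sum_mono drop)
      also have "\<dots> = (\<Sum>n\<in>S. V (a n) - V (b n))"
      proof (rule sum.mono_neutral_right)
        show "finite {..<N}" by simp
        show "S \<subseteq> {..<N}" by (auto simp: S_def)
        show "\<forall>i\<in>{..<N} - S. V (a i) - V (b i) = 0"
          using intervals by (auto simp: S_def) (metis order.antisym not_less)
      qed
      also have "\<dots> \<le> V 0 - V (Max (insert 0 (b ` S)))"
      proof (rule disjoint_sum[where F=V and S=S and a=a and b=b and c=0 and d="Max (insert 0 (b ` S))"])
        show "\<And>s t. 0 \<le> s \<Longrightarrow> s \<le> t \<Longrightarrow> V t \<le> V s" by (rule V_mono)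
        show "finite S" by (simp add: S_def)
        show "\<And>n. n \<in> S \<Longrightarrow> 0 \<le> a n \<and> a n < b n" using intervals by (auto simp: S_def)
        show "\<And>m n. m \<in> S \<Longrightarrow> n \<in> S \<Longrightarrow> m \<noteq> n \<Longrightarrow> b m \<le> a n \<or> b n \<le> a m"
          using disj_open disjoint by (auto simp: S_def)
        show "0 \<le> (0::real)" by simp
        show "0 \<le> Max (insert 0 (b ` S))" by (simp add: S_def)
        show "\<And>n. n \<in> S \<Longrightarrow> 0 \<le> a n \<and> b n \<le> Max (insert 0 (b ` S))"
          using intervals by (auto simp: S_def)
      qed
      also have "\<dots> \<le> V 0" using V0 by simp
      finally show ?thesis .
    qed
    have sumT: "summable \<theta>"
    proof (rule summableI_nonneg_bounded[where x="V 0 / (c * v)"])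
      show "0 \<le> \<theta> n" for n by (rule \<theta>0)
      fix N
      have "(\<Sum>n<N. c * \<theta> n * v) = (c * v) * (\<Sum>n<N. \<theta> n)" by (simp add: sum_distrib_left mult_ac)
      then have "(c * v) * (\<Sum>n<N. \<theta> n) \<le> V 0" using part[of N] by simp
      then show "(\<Sum>n<N. \<theta> n) \<le> V 0 / (c * v)" using c vpos by (simp add: field_simps)
    qed
    have "\<theta> \<longlonglongrightarrow> 0" by (rule summable_LIMSEQ_zero[OF sumT])
    moreover have "(0::real) < (L0/2)^(2*kk+1)" using L0 by simp
    ultimately have ev: "\<forall>\<^sub>F n in sequentially. \<theta> n < (L0/2)^(2*kk+1)" by (rule order_tendstoD(2))
    have "\<forall>\<^sub>F n in sequentially. \<theta> n = (b n - a n)^(2*kk+1)"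
    proof (rule eventually_mono[OF ev])
      fix n assume "\<theta> n < (L0/2)^(2*kk+1)"
      then have "b n - a n < L0/2"
      proof (rule contrapos_pp)
        assume "\<not> b n - a n < L0/2"
        then have "min (b n - a n) (L0/2) = L0/2" by simp
        then show "\<not> \<theta> n < (L0/2)^(2*kk+1)" unfolding \<theta>_def by (simp only:)
      qed
      then show "\<theta> n = (b n - a n)^(2*kk+1)" by (simp add: \<theta>_def)
    qed
    then have "summable (\<lambda>n. (b n - a n)^(2*kk+1))" using sumT summable_cong[of \<theta> "\<lambda>n. (b n - a n)^(2*kk+1)"] by simp
    then show False using diverge by (simp add: kk_def)
  qed
  have "((\<lambda>t. sqrt (V t)) \<longlongrightarrow> sqrt 0) at_top"
    using lim v_zero by (intro tendsto_real_sqrt) simp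
  then show ?thesis by (simp add: V_def)
qed


end
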